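(* Let $n\ge 4$ and let $\varepsilon:UV_n(2)\to\mathrm{GL}_{n+1}(\mathbb{C})$ be a nontrivial homogeneous $3$-local representation. Then, up to equivalence, $\varepsilon$ is equal to one of four representations $\varepsilon_j$ ($1\le j\le 4$) given by $\varepsilon_j(\rho_i)=\mathrm{diag}(I_{i-1},R^{(j)},I_{n-i-1})$, $\varepsilon_j(\sigma_{i,1})=\mathrm{diag}(I_{i-1},S_1^{(j)},I_{n-i-1})$, $\varepsilon_j(\sigma_{i,2})=\mathrm{diag}(I_{i-1},S_2^{(j)},I_{n-i-1})$ for all $1\le i\le n-1$, where (with $t\in\{1,2\}$): (1) $R^{(1)}=\begin{pmatrix}1&0&0\\0&0&r_6\\0&\frac1{r_6}&0\end{pmatrix}$, $S_t^{(1)}=\begin{pmatrix}1&0&0\\0&s_{5,t}&s_{6,t}\\0&s_{8,t}&s_{9,t}\end{pmatrix}$, with $r_6\ne0$ and $s_{5,t}s_{9,t}-s_{6,t}s_{8,t}\ne0$; (2) $R^{(2)}=\begin{pmatrix}0&r_2&0\\ \frac1{r_2}&0&0\\0&0&1\end{pmatrix}$, $S_t^{(2)}=\begin{pmatrix}s_{1,t}&s_{2,t}&0\\ s_{4,t}&s_{5,t}&0\\0&0&1\end{pmatrix}$, with $r_2\ne0$ and $s_{1,t}s_{5,t}-s_{2,t}s_{4,t}\ne0$; (3) $R^{(3)}=\begin{pmatrix}1&0&0\\ \frac1{r_6}&-1&r_6\\0&0&1\end{pmatrix}$, $S_t^{(3)}=\begin{pmatrix}1&0&0\\ s_{4,t}&s_{5,t}&r_6(1-r_6s_{4,t}-s_{5,t})\\0&0&1\end{pmatrix}$,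 with $r_6\ne0$ and $s_{5,t}\ne0$; (4) $R^{(4)}=\begin{pmatrix}1&r_2&0\\0&-1&0\\0&\frac1{r_2}&1\end{pmatrix}$, $S_t^{(4)}=\begin{pmatrix}1&r_2(1-s_{5,t}-r_2s_{8,t})&0\\0&s_{5,t}&0\\0&s_{8,t}&1\end{pmatrix}$, with $r_2\ne0$ and $s_{5,t}\ne0$. All parameters are complex numbers.
   Context: $UV_n(c)$ is the group with generators $\rho_i$ ($1\le i\le n-1$), $\sigma_{i,t}$ ($1\le i\le n-1$, $1\le t\le c$) and relations $\rho_i\rho_{i+1}\rho_i=\rho_{i+1}\rho_i\rho_{i+1}$, $\rho_i\rho_j=\rho_j\rho_i$ ($|i-j|\ge2$), $\rho_i^2=1$, $\sigma_{i,t}\sigma_{j,\ell}=\sigma_{j,\ell}\sigma_{i,t}$ ($|i-j|\ge2$), $\sigma_{i,t}\rho_j=\rho_j\sigma_{i,t}$ ($|i-j|\ge2$), $\rho_i\rho_{i+1}\sigma_{i,t}=\sigma_{i+1,t}\rho_i\rho_{i+1}$ ($1\le i\le n-2$). A representation $\theta:UV_n(2)\to\mathrm{GL}_{n+1}(\mathbb{C})$ is homogeneous $3$-local if there are $R,S_1,S_2\in\mathrm{GL}_3(\mathbb{C})$ with $\theta(\rho_i)=\mathrm{diag}(I_{i-1},R,I_{n-i-1})$, $\theta(\sigma_{i,t})=\mathrm{diag}(I_{i-1},S_t,I_{n-i-1})$ for all $i$ and $t=1,2$ (block diagonal, $I_r$ the $r\times r$ identity). Nontrivial means not the trivial representation;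 equivalence means conjugacy by a fixed invertible matrix. *)

theory Defs
  imports "Jordan_Normal_Form.Matrix"
begin

text \<open>Matrices are Jordan_Normal_Form matrices over complex numbers, rows/columns
indexed from 0. The block matrix diag(I_(i-1), A, I_(n-i-1)) of size n+1, for a
3x3 matrix A and 1 \<le> i \<le> n-1, has A in rows/columns i-1, i, i+1.\<close>

definition blk :: "nat \<Rightarrow> nat \<Rightarrow> complex mat \<Rightarrow> complex mat" where
  "blk n i A = mat (n+1) (n+1) (\<lambda>(a,b).
     if i - 1 \<le> a \<and> a \<le> i + 1 \<and> i - 1 \<le> b \<and> b \<le> i + 1
     then A $$ (a - (i - 1), b - (i - 1))
     else if a = b then 1 else 0)"

text \<open>The defining relations of UV_n(c), for c = 2, imposed on the images
rho i (1 \<le> i \<le> n-1) and sig i t (1 \<le> i \<le> n-1, t \<in> {1,2}), all invertible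
(n+1)x(n+1) matrices. By the universal property of a group presentation, such an
assignment is exactly a representation UV_n(2) \<rightarrow> GL_(n+1)(C).\<close>

definition UV2_rep :: "nat \<Rightarrow> (nat \<Rightarrow> complex mat) \<Rightarrow> (nat \<Rightarrow> nat \<Rightarrow> complex mat) \<Rightarrow> bool" where
  "UV2_rep n rho sig \<longleftrightarrow>
    (\<forall>i\<in>{1..n-1}. rho i \<in> carrier_mat (n+1) (n+1) \<and> invertible_mat (rho i)) \<and>
    (\<forall>i\<in>{1..n-1}. \<forall>t\<in>{1,2::nat}. sig i t \<in> carrier_mat (n+1) (n+1) \<and> invertible_mat (sig i t)) \<and>
    (\<forall>i\<in>{1..n-2}. rho i * rho (i+1) * rho i = rho (i+1) * rho i * rho (i+1)) \<and>
    (\<forall>i\<in>{1..n-1}. \<forall>j\<in>{1..n-1}. (i + 2 \<le> j \<or> j + 2 \<le> i) \<longrightarrow> rho i * rho j = rho j * rho i) \<and>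
    (\<forall>i\<in>{1..n-1}. rho i * rho i = 1\<^sub>m (n+1)) \<and>
    (\<forall>i\<in>{1..n-1}. \<forall>j\<in>{1..n-1}. \<forall>t\<in>{1,2::nat}. \<forall>l\<in>{1,2::nat}.
        (i + 2 \<le> j \<or> j + 2 \<le> i) \<longrightarrow> sig i t * sig j l = sig j l * sig i t) \<and>
    (\<forall>i\<in>{1..n-1}. \<forall>j\<in>{1..n-1}. \<forall>t\<in>{1,2::nat}.
        (i + 2 \<le> j \<or> j + 2 \<le> i) \<longrightarrow> sig i t * rho j = rho j * sig i t) \<and>
    (\<forall>i\<in>{1..n-2}. \<forall>t\<in>{1,2::nat}.
        rho i * rho (i+1) * sig i t = sig (i+1) t * rho i * rho (i+1))"

definition fam1 :: "complex mat \<Rightarrow> complex mat \<Rightarrow> complex mat \<Rightarrow> bool" where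
  "fam1 R S1 S2 \<longleftrightarrow> (\<exists>r6. r6 \<noteq> 0 \<and>
     R = mat_of_rows_list 3 [[1,0,0],[0,0,r6],[0,1/r6,0]] \<and>
     (\<forall>S\<in>{S1,S2}. \<exists>s5 s6 s8 s9. s5*s9 - s6*s8 \<noteq> 0 \<and>
        S = mat_of_rows_list 3 [[1,0,0],[0,s5,s6],[0,s8,s9]]))"

definition fam2 :: "complex mat \<Rightarrow> complex mat \<Rightarrow> complex mat \<Rightarrow> bool" where
  "fam2 R S1 S2 \<longleftrightarrow> (\<exists>r2. r2 \<noteq> 0 \<and>
     R = mat_of_rows_list 3 [[0,r2,0],[1/r2,0,0],[0,0,1]] \<and>
     (\<forall>S\<in>{S1,S2}. \<exists>s1 s2 s4 s5. s1*s5 - s2*s4 \<noteq> 0 \<and>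
        S = mat_of_rows_list 3 [[s1,s2,0],[s4,s5,0],[0,0,1]]))"

definition fam3 :: "complex mat \<Rightarrow> complex mat \<Rightarrow> complex mat \<Rightarrow> bool" where
  "fam3 R S1 S2 \<longleftrightarrow> (\<exists>r6. r6 \<noteq> 0 \<and>
     R = mat_of_rows_list 3 [[1,0,0],[1/r6,-1,r6],[0,0,1]] \<and>
     (\<forall>S\<in>{S1,S2}. \<exists>s4 s5. s5 \<noteq> 0 \<and>
        S = mat_of_rows_list 3 [[1,0,0],[s4,s5,r6*(1 - r6*s4 - s5)],[0,0,1]]))"

definition fam4 :: "complex mat \<Rightarrow> complex mat \<Rightarrow> complex mat \<Rightarrow> bool" where
  "fam4 R S1 S2 \<longleftrightarrow> (\<exists>r2. r2 \<noteq> 0 \<and>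
     R = mat_of_rows_list 3 [[1,r2,0],[0,-1,0],[0,1/r2,1]] \<and>
     (\<forall>S\<in>{S1,S2}. \<exists>s5 s8. s5 \<noteq> 0 \<and>
        S = mat_of_rows_list 3 [[1,r2*(1 - s5 - r2*s8),0],[0,s5,0],[0,s8,1]]))"

end

theory Submission
  imports Defs
begin

definition loc :: "nat \<Rightarrow> complex mat \<Rightarrow> bool" where
  "loc n M \<longleftrightarrow> M \<in> carrier_mat (n+1) (n+1) \<and>
     (\<forall>a\<le>n. \<forall>b\<le>n. (5 \<le> a \<or> 5 \<le> b) \<longrightarrow> M $$ (a,b) = (if a = b then 1 else 0))"

lemma blk_carrier[simp]: "blk n i A \<in> carrier_mat (n+1) (n+1)"
  by (simp add: blk_def)

lemma blk_idx: "a \<le> n \<Longrightarrow> b \<le> n \<Longrightarrow> blk n i A $$ (a,b) =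
  (if i - 1 \<le> a \<and> a \<le> i + 1 \<and> i - 1 \<le> b \<and> b \<le> i + 1
     then A $$ (a - (i - 1), b - (i - 1)) else if a = b then 1 else 0)"
  by (simp add: blk_def)

lemma blk_idx5: "4 \<le> n \<Longrightarrow> a < 5 \<Longrightarrow> b < 5 \<Longrightarrow> blk n i A $$ (a,b) =
  (if i - 1 \<le> a \<and> a \<le> i + 1 \<and> i - 1 \<le> b \<and> b \<le> i + 1
     then A $$ (a - (i - 1), b - (i - 1)) else if a = b then 1 else 0)"
  by (simp add: blk_def)

lemma loc_blk: "1 \<le> i \<Longrightarrow> i \<le> 3 \<Longrightarrow> loc n (blk n i A)"
  unfolding loc_def apply (intro conjI) apply (rule blk_carrier) by (auto simp: blk_idx)

lemma loc_mult: assumes "loc n M" "loc n N" shows "loc n (M*N)"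
proof -
  have M: "M \<in> carrier_mat (n+1) (n+1)" and N: "N \<in> carrier_mat (n+1) (n+1)"
    using assms unfolding loc_def by auto
  have MN: "M*N \<in> carrier_mat (n+1) (n+1)" using M N by simp
  have e: "(M*N) $$ (a,b) = (\<Sum>k\<in>{0..<n+1}. M $$ (a,k) * N $$ (k,b))" if "a \<le> n" "b \<le> n" for a b
    using M N that by (simp add: scalar_prod_def)
  have "(M*N) $$ (a,b) = (if a = b then 1 else 0)" if ab: "a \<le> n" "b \<le> n" "5 \<le> a \<or> 5 \<le> b" for a b
  proof (cases "5 \<le> a")
    case True
    have "(\<Sum>k\<in>{0..<n+1}. M $$ (a,k) * N $$ (k,b)) = (\<Sum>k\<in>{0..<n+1}. (if a = k then N $$ (k,b) else 0))"
      apply (rule sum.cong, simp)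
      using assms(1) True ab unfolding loc_def by auto
    also have "\<dots> = N $$ (a,b)" using ab by simp
    also have "\<dots> = (if a = b then 1 else 0)" using assms(2) True ab unfolding loc_def by auto
    finally show ?thesis using e ab by simp
  next
    case False
    then have b5: "5 \<le> b" using ab by auto
    have "(\<Sum>k\<in>{0..<n+1}. M $$ (a,k) * N $$ (k,b)) = (\<Sum>k\<in>{0..<n+1}. (if k = b then M $$ (a,k) else 0))"
      apply (rule sum.cong, simp)
      using assms(2) b5 ab unfolding loc_def by auto
    also have "\<dots> = M $$ (a,b)" using ab by simp
    also have "\<dots> = (if a = b then 1 else 0)" using assms(1) b5 ab unfolding loc_def by auto
    finally show ?thesis using e ab by simp
  qed
  then show ?thesis using MN unfolding loc_def by auto
qed

lemma mult_entry: assumes "4 \<le> n" "loc n M" "loc n N" "a < 5" "b < 5"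
  shows "(M*N) $$ (a,b) = M$$(a,0)*N$$(0,b) + M$$(a,1)*N$$(1,b) + M$$(a,2)*N$$(2,b)
     + M$$(a,3)*N$$(3,b) + M$$(a,4)*N$$(4,b)"
proof -
  have M: "M \<in> carrier_mat (n+1) (n+1)" and N: "N \<in> carrier_mat (n+1) (n+1)"
    using assms unfolding loc_def by auto
  have "(M*N) $$ (a,b) = (\<Sum>k\<in>{0..<n+1}. M $$ (a,k) * N $$ (k,b))"
    using M N assms by (simp add: scalar_prod_def)
  also have "{0..<n+1} = {0..<5} \<union> {5..<n+1}" using assms by auto
  also have "(\<Sum>k\<in>{0..<5} \<union> {5..<n+1}. M $$ (a,k) * N $$ (k,b)) =
     (\<Sum>k\<in>{0..<5}. M $$ (a,k) * N $$ (k,b)) + (\<Sum>k\<in>{5..<n+1}. M $$ (a,k) * N $$ (k,b))"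
    by (rule sum.union_disjoint) auto
  also have "(\<Sum>k\<in>{5..<n+1}. M $$ (a,k) * N $$ (k,b)) = 0"
    apply (rule sum.neutral) using assms(2,4) unfolding loc_def by auto
  also have "(\<Sum>k\<in>{0..<5}. M $$ (a,k) * N $$ (k,b)) = M$$(a,0)*N$$(0,b) + M$$(a,1)*N$$(1,b) + M$$(a,2)*N$$(2,b)
     + M$$(a,3)*N$$(3,b) + M$$(a,4)*N$$(4,b)"
    by (simp add: numeral_eq_Suc)
  finally show ?thesis by simp
qed

lemma mat3: "A \<in> carrier_mat 3 3 \<Longrightarrow> A = mat_of_rows_list 3
  [[A$$(0,0),A$$(0,1),A$$(0,2)],[A$$(1,0),A$$(1,1),A$$(1,2)],[A$$(2,0),A$$(2,1),A$$(2,2)]]"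
  apply (rule eq_matI)
  apply (auto simp: mat_of_rows_list_def)
  subgoal for i j
    by (cases i; cases j) (auto simp: less_Suc_eq numeral_eq_Suc nth_Cons' split: nat.splits if_splits)
  done

definition RF1 :: "complex \<Rightarrow> complex \<Rightarrow> complex \<Rightarrow> complex \<Rightarrow> complex \<Rightarrow> complex \<Rightarrow> complex \<Rightarrow> complex \<Rightarrow> complex \<Rightarrow> bool" where
  "RF1 r1 r2 r3 r4 r5 r6 r7 r8 r9 \<longleftrightarrow> r1=1 \<and> r2=0 \<and> r3=0 \<and> r4=0 \<and> r5=0 \<and> r7=0 \<and> r9=0 \<and> r6*r8=1"
definition RF2 :: "complex \<Rightarrow> complex \<Rightarrow> complex \<Rightarrow> complex \<Rightarrow> complex \<Rightarrow> complex \<Rightarrow> complex \<Rightarrow> complex \<Rightarrow> complex \<Rightarrow> bool" where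
  "RF2 r1 r2 r3 r4 r5 r6 r7 r8 r9 \<longleftrightarrow> r1=0 \<and> r3=0 \<and> r5=0 \<and> r6=0 \<and> r7=0 \<and> r8=0 \<and> r9=1 \<and> r2*r4=1"
definition RF3 :: "complex \<Rightarrow> complex \<Rightarrow> complex \<Rightarrow> complex \<Rightarrow> complex \<Rightarrow> complex \<Rightarrow> complex \<Rightarrow> complex \<Rightarrow> complex \<Rightarrow> bool" where
  "RF3 r1 r2 r3 r4 r5 r6 r7 r8 r9 \<longleftrightarrow> r1=1 \<and> r2=0 \<and> r3=0 \<and> r5= -1 \<and> r7=0 \<and> r8=0 \<and> r9=1 \<and> r4*r6=1"
definition RF4 :: "complex \<Rightarrow> complex \<Rightarrow> complex \<Rightarrow> complex \<Rightarrow> complex \<Rightarrow> complex \<Rightarrow> complex \<Rightarrow> complex \<Rightarrow> complex \<Rightarrow> bool" where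
  "RF4 r1 r2 r3 r4 r5 r6 r7 r8 r9 \<longleftrightarrow> r1=1 \<and> r3=0 \<and> r4=0 \<and> r5= -1 \<and> r6=0 \<and> r7=0 \<and> r9=1 \<and> r2*r8=1"
definition RI :: "complex \<Rightarrow> complex \<Rightarrow> complex \<Rightarrow> complex \<Rightarrow> complex \<Rightarrow> complex \<Rightarrow> complex \<Rightarrow> complex \<Rightarrow> complex \<Rightarrow> bool" where
  "RI r1 r2 r3 r4 r5 r6 r7 r8 r9 \<longleftrightarrow> r1=1 \<and> r2=0 \<and> r3=0 \<and> r4=0 \<and> r5=1 \<and> r6=0 \<and> r7=0 \<and> r8=0 \<and> r9=1"

lemma R_cls:
  fixes r1 r2 r3 r4 r5 r6 r7 r8 r9 :: complex
  assumes c02: "r1*r3 + -r3 = 0"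
  and c03: "r2*r3 = 0"
  and c04: "r3*r3 = 0"
  and c12: "r1*r6 + -r6 = 0"
  and c13: "r2*r6 = 0"
  and c14: "r3*r6 = 0"
  and c20: "-r1*r7 + r7 = 0"
  and c21: "-r1*r8 + r8 = 0"
  and c23: "-r2 + r2*r9 = 0"
  and c24: "-r3 + r3*r9 = 0"
  and c30: "-r4*r7 = 0"
  and c31: "-r4*r8 = 0"
  and c32: "r4 + -r4*r9 = 0"
  and c40: "-r7*r7 = 0"
  and c41: "-r7*r8 = 0"
  and c42: "r7 + -r7*r9 = 0"
  and q00: "(-1) + r1*r1 + r2*r4 + r3*r7 = 0"
  and q01: "r1*r2 + r2*r5 + r3*r8 = 0"
  and q02: "r1*r3 + r2*r6 + r3*r9 = 0"
  and q10: "r1*r4 + r4*r5 + r6*r7 = 0"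
  and q11: "(-1) + r2*r4 + r5*r5 + r6*r8 = 0"
  and q12: "r3*r4 + r5*r6 + r6*r9 = 0"
  and q20: "r1*r7 + r4*r8 + r7*r9 = 0"
  and q21: "r2*r7 + r5*r8 + r8*r9 = 0"
  and q22: "(-1) + r3*r7 + r6*r8 + r9*r9 = 0"
  and b00: "-r1 + r1*r2*r4 + r1*r1 + r2*r2*r7 + r3*r4*r4 + r3*r5*r7 = 0"
  and b01: "r1*r2*r5 + r2*r2*r8 + -r3*r4 + r3*r4*r5 + r3*r5*r8 = 0"
  and b02: "r1*r2*r6 + r1*r3 + -r2*r2 + r2*r2*r9 + r3*r4*r6 + -r3*r5 + r3*r5*r9 = 0"
  and b10: "r1*r4*r5 + r2*r5*r7 + -r2*r7 + r4*r4*r6 + r5*r6*r7 = 0"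
  and b11: "-r1*r2*r8 + -r1*r4*r6 + r1*r5*r5 + -r1*r1*r5 + r2*r4 + -r2*r4*r9 + r2*r5*r8 + -r3*r7 + r4*r5*r6 + r5*r6*r8 = 0"
  and b12: "-r1*r2*r5 + -r2*r2*r8 + r3*r4 + -r3*r8 + r4*r6*r6 + r5*r6*r9 = 0"
  and b13: "-r1*r3*r5 + -r1*r6*r6 + -r2*r3*r8 + -r2*r6*r9 + r3*r5 + -r3*r9 + r6*r6 = 0"
  and b20: "r1*r4*r8 + r1*r7 + r2*r7*r8 + -r4*r4 + r4*r4*r9 + -r5*r7 + r5*r7*r9 = 0"
  and b21: "-r1*r4*r5 + r2*r7 + r2*r8*r8 + -r4*r4*r6 + r5*r8*r9 + -r6*r7 = 0"
  and b22: "r1*r6*r8 + -r2*r4*r5 + -r2*r5*r8 + r2*r8*r9 + r3*r7 + -r4*r5*r6 + r4*r6*r9 + r5*r9*r9 + -r5*r5*r9 + -r6*r8 = 0"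
  and b23: "-r3*r4*r5 + -r3*r5*r8 + r3*r8 + -r4*r6*r6 + -r5*r6*r9 = 0"
  and b31: "-r1*r5*r7 + -r1*r8*r8 + -r4*r6*r7 + -r4*r8*r9 + r5*r7 + -r7*r9 + r8*r8 = 0"
  and b32: "-r2*r5*r7 + -r2*r8*r8 + -r5*r6*r7 + -r5*r8*r9 + r6*r7 = 0"
  and b33: "-r3*r5*r7 + -r3*r8*r8 + -r6*r8*r9 + -r6*r6*r7 + r9 + -r9*r9 = 0"
  shows "RF1 r1 r2 r3 r4 r5 r6 r7 r8 r9 \<or> RF2 r1 r2 r3 r4 r5 r6 r7 r8 r9 \<or> RF3 r1 r2 r3 r4 r5 r6 r7 r8 r9 \<or>
         RF4 r1 r2 r3 r4 r5 r6 r7 r8 r9 \<or> RI r1 r2 r3 r4 r5 r6 r7 r8 r9"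
proof -
  have r3: "r3 = 0" using c04 by simp
  have r7: "r7 = 0" using c40 by simp
  have f13: "r2 = 0 \<or> r6 = 0" using c13 by simp
  have f31: "r4 = 0 \<or> r8 = 0" using c31 by simp
  have f12: "r6 = 0 \<or> r1 = 1" using c12 by (simp add: algebra_simps)
  have f21: "r8 = 0 \<or> r1 = 1" using c21 by (simp add: algebra_simps)
  have f23: "r2 = 0 \<or> r9 = 1" using c23 by (simp add: algebra_simps)
  have f32: "r4 = 0 \<or> r9 = 1" using c32 by (simp add: algebra_simps)
  have g01: "r2 * (r1 + r5) = 0" using q01 r3 by (simp add: algebra_simps)
  have g10: "r4 * (r1 + r5) = 0" using q10 r7 by (simp add: algebra_simps)
  have g12: "r6 * (r5 + r9) = 0" using q12 r3 by (simp add: algebra_simps)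
  have g21: "r8 * (r5 + r9) = 0" using q21 r7 by (simp add: algebra_simps)
  consider (a) "r2 \<noteq> 0" "r4 \<noteq> 0" | (b) "r2 \<noteq> 0" "r4 = 0" | (c) "r2 = 0" "r4 \<noteq> 0"
    | (d) "r2 = 0" "r4 = 0" "r6 \<noteq> 0" | (e) "r2 = 0" "r4 = 0" "r6 = 0" "r8 \<noteq> 0"
    | (f) "r2 = 0" "r4 = 0" "r6 = 0" "r8 = 0" by blast
  then show ?thesis
  proof cases
    case a
    have r6: "r6 = 0" using f13 a by simp
    have r9: "r9 = 1" using f23 a by simp
    have r8: "r8 = 0" using f31 a by simp
    have r5: "r5 = - r1" using g01 a by (simp add: eq_neg_iff_add_eq_0 add.commute)
    have "r1 * r1 * r2 = 0" using b12 r3 r6 r7 r8 r5 by (simp add: algebra_simps)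
    then have r1: "r1 = 0" using a by simp
    have "r2 * r4 = 1" using q00 r1 r3 by (simp add: algebra_simps)
    then have "RF2 r1 r2 r3 r4 r5 r6 r7 r8 r9" unfolding RF2_def using r1 r3 r5 r6 r7 r8 r9 by simp
    then show ?thesis by blast
  next
    case b
    have r6: "r6 = 0" using f13 b by simp
    have r9: "r9 = 1" using f23 b by simp
    have r5: "r5 = - r1" using g01 b by (simp add: eq_neg_iff_add_eq_0 add.commute)
    have q: "r1 * r1 = 1" using q00 b r3 by (simp add: algebra_simps)
    have "r2 * (r2 * r8 - 1) = 0" using b01 b r3 r5 q by (simp add: algebra_simps)
    then have r28: "r2 * r8 = 1" using b by simp
    then have "r8 \<noteq> 0" by auto
    then have r1: "r1 = 1" using f21 by simp
    have "RF4 r1 r2 r3 r4 r5 r6 r7 r8 r9" unfolding RF4_def using r1 r3 r5 r6 r7 r9 r28 b by simp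
    then show ?thesis by blast
  next
    case c
    have r8: "r8 = 0" using f31 c by simp
    have r9: "r9 = 1" using f32 c by simp
    have r5: "r5 = - r1" using g10 c by (simp add: eq_neg_iff_add_eq_0 add.commute)
    have q: "r1 * r1 = 1" using q00 c r3 by (simp add: algebra_simps)
    have "r4 * (r4 * r6 - 1) = 0" using b10 c r7 r5 q by (simp add: algebra_simps)
    then have r46: "r4 * r6 = 1" using c by simp
    then have "r6 \<noteq> 0" by auto
    then have r1: "r1 = 1" using f12 by simp
    have "RF3 r1 r2 r3 r4 r5 r6 r7 r8 r9" unfolding RF3_def using r1 r3 r5 r7 r8 r9 r46 c by simp
    then show ?thesis by blast
  next
    case d
    have r1: "r1 = 1" using f12 d by simp
    have r9: "r9 = - r5" using g12 d by (simp add: eq_neg_iff_add_eq_0 add.commute)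
    have "r5 * r5 * r6 = 0" using b12 d r3 r9 by (simp add: algebra_simps)
    then have r5: "r5 = 0" using d by simp
    have r68: "r6 * r8 = 1" using q22 r3 r9 r5 by (simp add: algebra_simps)
    have "RF1 r1 r2 r3 r4 r5 r6 r7 r8 r9" unfolding RF1_def using r1 r3 r5 r7 r9 r68 d by simp
    then show ?thesis by blast
  next
    case e
    have r9: "r9 = - r5" using g21 e by (simp add: eq_neg_iff_add_eq_0 add.commute)
    have "r5 * r5 * r8 = 0" using b32 e r7 r9 by (simp add: algebra_simps)
    then have r5: "r5 = 0" using e by simp
    have False using q22 r3 r9 r5 e by (simp add: algebra_simps)
    then show ?thesis by blast
  next
    case f
    have q: "r1 * r1 = 1" using q00 f r3 by (simp add: algebra_simps)
    have "r1 * (r1 - 1) = 0" using b00 f r3 r7 by (simp add: algebra_simps)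
    then have r1: "r1 = 1" using q by auto
    have q9: "r9 * r9 = 1" using q22 f r3 by (simp add: algebra_simps)
    have "r9 * (r9 - 1) = 0" using b33 f r3 r7 by (simp add: algebra_simps)
    then have r9: "r9 = 1" using q9 by auto
    have q5: "r5 * r5 = 1" using q11 f by (simp add: algebra_simps)
    have "r5 * (r5 - 1) = 0" using b11 f r1 r3 r7 r9 by (simp add: algebra_simps)
    then have r5: "r5 = 1" using q5 by auto
    have "RI r1 r2 r3 r4 r5 r6 r7 r8 r9" unfolding RI_def using r1 r3 r5 r7 r9 f by simp
    then show ?thesis by blast
  qed
qed

lemma S_F1:
  fixes r1 r2 r3 r4 r5 r6 r7 r8 r9 s1 s2 s3 s4 s5 s6 s7 s8 s9 :: complex
  assumes x02: "r1*s3 + -s3 = 0"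
  and x03: "r2*s3 = 0"
  and x12: "r1*s6 + -s6 = 0"
  and x13: "r2*s6 = 0"
  and x20: "-r1*s7 + s7 = 0"
  and x21: "-r1*s8 + s8 = 0"
  and x23: "-r2 + r2*s9 = 0"
  and y21: "-r8 + r8*s1 = 0"
  and y23: "-r9*s2 + s2 = 0"
  and y24: "-r9*s3 + s3 = 0"
  and y31: "r8*s4 = 0"
  and y32: "r9*s4 + -s4 = 0"
  and y42: "r9*s7 + -s7 = 0"
  and m00: "-r1 + r1*r2*s4 + r1*s1 + r2*r2*s7 + r3*r4*s4 + r3*r5*s7 = 0"
  and m01: "-r1*r2 + r1*r2*s5 + r1*s2 + r2*r2*s8 + -r3*r4 + r3*r4*s5 + r3*r5*s8 = 0"
  and m02: "r1*r2*s6 + r1*s3 + -r2*r2 + r2*r2*s9 + r3*r4*s6 + -r3*r5 + r3*r5*s9 = 0"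
  and m10: "r1*r5*s4 + r2*r5*s7 + r4*r6*s4 + r5*r6*s7 + -r7*s2 = 0"
  and m11: "-r1*r5*s1 + r1*r5*s5 + -r1*r8*s2 + r2*r5*s8 + -r4*r6*s1 + r4*r6*s5 + -r4*r9*s2 + r4*s2 + r5*r6*s8 + -r7*s3 = 0"
  and m12: "r1*r5*s6 + -r2*r5*s1 + r2*r5*s9 + -r2*r8*s2 + r4*r6*s6 + r4*s3 + -r5*r6*s1 + r5*r6*s9 + -r5*r9*s2 + -r8*s3 = 0"
  and m20: "r1*r8*s4 + r2*r8*s7 + r4*r9*s4 + -r4*s4 + r5*r9*s7 + r7*s1 + -r7*s5 = 0"
  and m21: "-r1*r5*s4 + r2*r8*s8 + -r4*r6*s4 + r5*r9*s8 + r7*s2 + -r7*s6 = 0"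
  and m22: "r1*r8*s6 + -r2*r5*s4 + -r2*r8*s5 + r2*r8*s9 + r4*r9*s6 + -r5*r6*s4 + -r5*r9*s5 + r5*r9*s9 + r7*s3 + -r8*s6 = 0"
  and m23: "-r3*r5*s4 + r3*r8 + -r3*r8*s5 + r6*r9 + -r6*r9*s5 + -r6*r6*s4 + -r9*s6 = 0"
  and m31: "-r1*r5*s7 + -r1*r8*s8 + -r4*r6*s7 + -r4*r9*s8 + r7*s5 + -r7*s9 + r8*s8 = 0"
  and m32: "-r2*r5*s7 + -r2*r8*s8 + -r5*r6*s7 + -r5*r9*s8 + r7*s6 = 0"
  and m33: "-r3*r5*s7 + -r3*r8*s8 + -r6*r9*s8 + -r6*r6*s7 + r9 + -r9*s9 = 0"
  and RF: "RF1 r1 r2 r3 r4 r5 r6 r7 r8 r9"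
  shows "s1=1 \<and> s2=0 \<and> s3=0 \<and> s4=0 \<and> s7=0"
proof -
  have r: "r1=1" "r2=0" "r3=0" "r4=0" "r5=0" "r7=0" "r9=0" using RF unfolding RF1_def by auto
  have "s1 = 1" using m00 r by simp
  moreover have "s2 = 0" using y23 r by simp
  moreover have "s3 = 0" using y24 r by simp
  moreover have "s4 = 0" using y32 r by simp
  moreover have "s7 = 0" using y42 r by simp
  ultimately show ?thesis by simp
qed

lemma S_F2:
  fixes r1 r2 r3 r4 r5 r6 r7 r8 r9 s1 s2 s3 s4 s5 s6 s7 s8 s9 :: complex
  assumes x02: "r1*s3 + -s3 = 0"
  and x03: "r2*s3 = 0"
  and x12: "r1*s6 + -s6 = 0"
  and x13: "r2*s6 = 0"
  and x20: "-r1*s7 + s7 = 0"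
  and x21: "-r1*s8 + s8 = 0"
  and x23: "-r2 + r2*s9 = 0"
  and y21: "-r8 + r8*s1 = 0"
  and y23: "-r9*s2 + s2 = 0"
  and y24: "-r9*s3 + s3 = 0"
  and y31: "r8*s4 = 0"
  and y32: "r9*s4 + -s4 = 0"
  and y42: "r9*s7 + -s7 = 0"
  and m00: "-r1 + r1*r2*s4 + r1*s1 + r2*r2*s7 + r3*r4*s4 + r3*r5*s7 = 0"
  and m01: "-r1*r2 + r1*r2*s5 + r1*s2 + r2*r2*s8 + -r3*r4 + r3*r4*s5 + r3*r5*s8 = 0"
  and m02: "r1*r2*s6 + r1*s3 + -r2*r2 + r2*r2*s9 + r3*r4*s6 + -r3*r5 + r3*r5*s9 = 0"
  and m10: "r1*r5*s4 + r2*r5*s7 + r4*r6*s4 + r5*r6*s7 + -r7*s2 = 0"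
  and m11: "-r1*r5*s1 + r1*r5*s5 + -r1*r8*s2 + r2*r5*s8 + -r4*r6*s1 + r4*r6*s5 + -r4*r9*s2 + r4*s2 + r5*r6*s8 + -r7*s3 = 0"
  and m12: "r1*r5*s6 + -r2*r5*s1 + r2*r5*s9 + -r2*r8*s2 + r4*r6*s6 + r4*s3 + -r5*r6*s1 + r5*r6*s9 + -r5*r9*s2 + -r8*s3 = 0"
  and m20: "r1*r8*s4 + r2*r8*s7 + r4*r9*s4 + -r4*s4 + r5*r9*s7 + r7*s1 + -r7*s5 = 0"
  and m21: "-r1*r5*s4 + r2*r8*s8 + -r4*r6*s4 + r5*r9*s8 + r7*s2 + -r7*s6 = 0"
  and m22: "r1*r8*s6 + -r2*r5*s4 + -r2*r8*s5 + r2*r8*s9 + r4*r9*s6 + -r5*r6*s4 + -r5*r9*s5 + r5*r9*s9 + r7*s3 + -r8*s6 = 0"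
  and m23: "-r3*r5*s4 + r3*r8 + -r3*r8*s5 + r6*r9 + -r6*r9*s5 + -r6*r6*s4 + -r9*s6 = 0"
  and m31: "-r1*r5*s7 + -r1*r8*s8 + -r4*r6*s7 + -r4*r9*s8 + r7*s5 + -r7*s9 + r8*s8 = 0"
  and m32: "-r2*r5*s7 + -r2*r8*s8 + -r5*r6*s7 + -r5*r9*s8 + r7*s6 = 0"
  and m33: "-r3*r5*s7 + -r3*r8*s8 + -r6*r9*s8 + -r6*r6*s7 + r9 + -r9*s9 = 0"
  and RF: "RF2 r1 r2 r3 r4 r5 r6 r7 r8 r9"
  shows "s3=0 \<and> s6=0 \<and> s7=0 \<and> s8=0 \<and> s9=1"
proof -
  have r: "r1=0" "r3=0" "r5=0" "r6=0" "r7=0" "r8=0" "r9=1" using RF unfolding RF2_def by auto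
  have "s3 = 0" using x02 r by simp
  moreover have "s6 = 0" using x12 r by simp
  moreover have "s7 = 0" using x20 r by simp
  moreover have "s8 = 0" using x21 r by simp
  moreover have "s9 = 1" using m33 r by simp
  ultimately show ?thesis by simp
qed

lemma S_F3:
  fixes r1 r2 r3 r4 r5 r6 r7 r8 r9 s1 s2 s3 s4 s5 s6 s7 s8 s9 :: complex
  assumes x02: "r1*s3 + -s3 = 0"
  and x03: "r2*s3 = 0"
  and x12: "r1*s6 + -s6 = 0"
  and x13: "r2*s6 = 0"
  and x20: "-r1*s7 + s7 = 0"
  and x21: "-r1*s8 + s8 = 0"
  and x23: "-r2 + r2*s9 = 0"
  and y21: "-r8 + r8*s1 = 0"
  and y23: "-r9*s2 + s2 = 0"
  and y24: "-r9*s3 + s3 = 0"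
  and y31: "r8*s4 = 0"
  and y32: "r9*s4 + -s4 = 0"
  and y42: "r9*s7 + -s7 = 0"
  and m00: "-r1 + r1*r2*s4 + r1*s1 + r2*r2*s7 + r3*r4*s4 + r3*r5*s7 = 0"
  and m01: "-r1*r2 + r1*r2*s5 + r1*s2 + r2*r2*s8 + -r3*r4 + r3*r4*s5 + r3*r5*s8 = 0"
  and m02: "r1*r2*s6 + r1*s3 + -r2*r2 + r2*r2*s9 + r3*r4*s6 + -r3*r5 + r3*r5*s9 = 0"
  and m10: "r1*r5*s4 + r2*r5*s7 + r4*r6*s4 + r5*r6*s7 + -r7*s2 = 0"
  and m11: "-r1*r5*s1 + r1*r5*s5 + -r1*r8*s2 + r2*r5*s8 + -r4*r6*s1 + r4*r6*s5 + -r4*r9*s2 + r4*s2 + r5*r6*s8 + -r7*s3 = 0"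
  and m12: "r1*r5*s6 + -r2*r5*s1 + r2*r5*s9 + -r2*r8*s2 + r4*r6*s6 + r4*s3 + -r5*r6*s1 + r5*r6*s9 + -r5*r9*s2 + -r8*s3 = 0"
  and m20: "r1*r8*s4 + r2*r8*s7 + r4*r9*s4 + -r4*s4 + r5*r9*s7 + r7*s1 + -r7*s5 = 0"
  and m21: "-r1*r5*s4 + r2*r8*s8 + -r4*r6*s4 + r5*r9*s8 + r7*s2 + -r7*s6 = 0"
  and m22: "r1*r8*s6 + -r2*r5*s4 + -r2*r8*s5 + r2*r8*s9 + r4*r9*s6 + -r5*r6*s4 + -r5*r9*s5 + r5*r9*s9 + r7*s3 + -r8*s6 = 0"
  and m23: "-r3*r5*s4 + r3*r8 + -r3*r8*s5 + r6*r9 + -r6*r9*s5 + -r6*r6*s4 + -r9*s6 = 0"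
  and m31: "-r1*r5*s7 + -r1*r8*s8 + -r4*r6*s7 + -r4*r9*s8 + r7*s5 + -r7*s9 + r8*s8 = 0"
  and m32: "-r2*r5*s7 + -r2*r8*s8 + -r5*r6*s7 + -r5*r9*s8 + r7*s6 = 0"
  and m33: "-r3*r5*s7 + -r3*r8*s8 + -r6*r9*s8 + -r6*r6*s7 + r9 + -r9*s9 = 0"
  and RF: "RF3 r1 r2 r3 r4 r5 r6 r7 r8 r9"
  shows "s1=1 \<and> s2=0 \<and> s3=0 \<and> s7=0 \<and> s8=0 \<and> s9=1 \<and> s6 = r6*(1 - r6*s4 - s5)"
proof -
  have r: "r1=1" "r2=0" "r3=0" "r5= -1" "r7=0" "r8=0" "r9=1" using RF unfolding RF3_def by auto
  have "s1 = 1" using m00 r by simp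
  moreover have "s2 = 0" using m01 r by simp
  moreover have "s3 = 0" using m02 r by simp
  moreover have s7: "s7 = 0" using m20 r by simp
  moreover have s8: "s8 = 0" using m32 r s7 by simp
  moreover have "s9 = 1" using m33 r s7 s8 by simp
  moreover have "s6 = r6*(1 - r6*s4 - s5)" using m23 r by (simp add: algebra_simps)
  ultimately show ?thesis by simp
qed

lemma S_F4:
  fixes r1 r2 r3 r4 r5 r6 r7 r8 r9 s1 s2 s3 s4 s5 s6 s7 s8 s9 :: complex
  assumes x02: "r1*s3 + -s3 = 0"
  and x03: "r2*s3 = 0"
  and x12: "r1*s6 + -s6 = 0"
  and x13: "r2*s6 = 0"
  and x20: "-r1*s7 + s7 = 0"
  and x21: "-r1*s8 + s8 = 0"
  and x23: "-r2 + r2*s9 = 0"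
  and y21: "-r8 + r8*s1 = 0"
  and y23: "-r9*s2 + s2 = 0"
  and y24: "-r9*s3 + s3 = 0"
  and y31: "r8*s4 = 0"
  and y32: "r9*s4 + -s4 = 0"
  and y42: "r9*s7 + -s7 = 0"
  and m00: "-r1 + r1*r2*s4 + r1*s1 + r2*r2*s7 + r3*r4*s4 + r3*r5*s7 = 0"
  and m01: "-r1*r2 + r1*r2*s5 + r1*s2 + r2*r2*s8 + -r3*r4 + r3*r4*s5 + r3*r5*s8 = 0"
  and m02: "r1*r2*s6 + r1*s3 + -r2*r2 + r2*r2*s9 + r3*r4*s6 + -r3*r5 + r3*r5*s9 = 0"
  and m10: "r1*r5*s4 + r2*r5*s7 + r4*r6*s4 + r5*r6*s7 + -r7*s2 = 0"
  and m11: "-r1*r5*s1 + r1*r5*s5 + -r1*r8*s2 + r2*r5*s8 + -r4*r6*s1 + r4*r6*s5 + -r4*r9*s2 + r4*s2 + r5*r6*s8 + -r7*s3 = 0"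
  and m12: "r1*r5*s6 + -r2*r5*s1 + r2*r5*s9 + -r2*r8*s2 + r4*r6*s6 + r4*s3 + -r5*r6*s1 + r5*r6*s9 + -r5*r9*s2 + -r8*s3 = 0"
  and m20: "r1*r8*s4 + r2*r8*s7 + r4*r9*s4 + -r4*s4 + r5*r9*s7 + r7*s1 + -r7*s5 = 0"
  and m21: "-r1*r5*s4 + r2*r8*s8 + -r4*r6*s4 + r5*r9*s8 + r7*s2 + -r7*s6 = 0"
  and m22: "r1*r8*s6 + -r2*r5*s4 + -r2*r8*s5 + r2*r8*s9 + r4*r9*s6 + -r5*r6*s4 + -r5*r9*s5 + r5*r9*s9 + r7*s3 + -r8*s6 = 0"
  and m23: "-r3*r5*s4 + r3*r8 + -r3*r8*s5 + r6*r9 + -r6*r9*s5 + -r6*r6*s4 + -r9*s6 = 0"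
  and m31: "-r1*r5*s7 + -r1*r8*s8 + -r4*r6*s7 + -r4*r9*s8 + r7*s5 + -r7*s9 + r8*s8 = 0"
  and m32: "-r2*r5*s7 + -r2*r8*s8 + -r5*r6*s7 + -r5*r9*s8 + r7*s6 = 0"
  and m33: "-r3*r5*s7 + -r3*r8*s8 + -r6*r9*s8 + -r6*r6*s7 + r9 + -r9*s9 = 0"
  and RF: "RF4 r1 r2 r3 r4 r5 r6 r7 r8 r9"
  shows "s1=1 \<and> s3=0 \<and> s4=0 \<and> s6=0 \<and> s7=0 \<and> s9=1 \<and> s2 = r2*(1 - s5 - r2*s8)"
proof -
  have r: "r1=1" "r3=0" "r4=0" "r5= -1" "r6=0" "r7=0" "r9=1" using RF unfolding RF4_def by auto
  have r28: "r2 * r8 = 1" using RF unfolding RF4_def by auto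
  then have nz: "r2 \<noteq> 0" "r8 \<noteq> 0" by auto
  have "s3 = 0" using x03 nz by simp
  moreover have "s6 = 0" using x13 nz by simp
  moreover have "r2 * (s9 - 1) = 0" using x23 by (simp add: algebra_simps)
  then have "s9 = 1" using nz by simp
  moreover have "r8 * (s1 - 1) = 0" using y21 by (simp add: algebra_simps)
  then have "s1 = 1" using nz by simp
  moreover have "s4 = 0" using y31 nz by simp
  moreover have "s7 = 0" using m31 r by simp
  moreover have "s2 = r2*(1 - s5 - r2*s8)" using m01 r by (simp add: algebra_simps)
  ultimately show ?thesis by simp
qed

lemma S_I:
  fixes r1 r2 r3 r4 r5 r6 r7 r8 r9 s1 s2 s3 s4 s5 s6 s7 s8 s9 :: complex
  assumes x02: "r1*s3 + -s3 = 0"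
  and x03: "r2*s3 = 0"
  and x12: "r1*s6 + -s6 = 0"
  and x13: "r2*s6 = 0"
  and x20: "-r1*s7 + s7 = 0"
  and x21: "-r1*s8 + s8 = 0"
  and x23: "-r2 + r2*s9 = 0"
  and y21: "-r8 + r8*s1 = 0"
  and y23: "-r9*s2 + s2 = 0"
  and y24: "-r9*s3 + s3 = 0"
  and y31: "r8*s4 = 0"
  and y32: "r9*s4 + -s4 = 0"
  and y42: "r9*s7 + -s7 = 0"
  and m00: "-r1 + r1*r2*s4 + r1*s1 + r2*r2*s7 + r3*r4*s4 + r3*r5*s7 = 0"
  and m01: "-r1*r2 + r1*r2*s5 + r1*s2 + r2*r2*s8 + -r3*r4 + r3*r4*s5 + r3*r5*s8 = 0"
  and m02: "r1*r2*s6 + r1*s3 + -r2*r2 + r2*r2*s9 + r3*r4*s6 + -r3*r5 + r3*r5*s9 = 0"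
  and m10: "r1*r5*s4 + r2*r5*s7 + r4*r6*s4 + r5*r6*s7 + -r7*s2 = 0"
  and m11: "-r1*r5*s1 + r1*r5*s5 + -r1*r8*s2 + r2*r5*s8 + -r4*r6*s1 + r4*r6*s5 + -r4*r9*s2 + r4*s2 + r5*r6*s8 + -r7*s3 = 0"
  and m12: "r1*r5*s6 + -r2*r5*s1 + r2*r5*s9 + -r2*r8*s2 + r4*r6*s6 + r4*s3 + -r5*r6*s1 + r5*r6*s9 + -r5*r9*s2 + -r8*s3 = 0"
  and m20: "r1*r8*s4 + r2*r8*s7 + r4*r9*s4 + -r4*s4 + r5*r9*s7 + r7*s1 + -r7*s5 = 0"
  and m21: "-r1*r5*s4 + r2*r8*s8 + -r4*r6*s4 + r5*r9*s8 + r7*s2 + -r7*s6 = 0"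
  and m22: "r1*r8*s6 + -r2*r5*s4 + -r2*r8*s5 + r2*r8*s9 + r4*r9*s6 + -r5*r6*s4 + -r5*r9*s5 + r5*r9*s9 + r7*s3 + -r8*s6 = 0"
  and m23: "-r3*r5*s4 + r3*r8 + -r3*r8*s5 + r6*r9 + -r6*r9*s5 + -r6*r6*s4 + -r9*s6 = 0"
  and m31: "-r1*r5*s7 + -r1*r8*s8 + -r4*r6*s7 + -r4*r9*s8 + r7*s5 + -r7*s9 + r8*s8 = 0"
  and m32: "-r2*r5*s7 + -r2*r8*s8 + -r5*r6*s7 + -r5*r9*s8 + r7*s6 = 0"
  and m33: "-r3*r5*s7 + -r3*r8*s8 + -r6*r9*s8 + -r6*r6*s7 + r9 + -r9*s9 = 0"
  and RF: "RI r1 r2 r3 r4 r5 r6 r7 r8 r9"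
  shows "s1=1 \<and> s2=0 \<and> s3=0 \<and> s4=0 \<and> s5=1 \<and> s6=0 \<and> s7=0 \<and> s8=0 \<and> s9=1"
proof -
  have r: "r1=1" "r2=0" "r3=0" "r4=0" "r5=1" "r6=0" "r7=0" "r8=0" "r9=1" using RF unfolding RI_def by auto
  have s1: "s1 = 1" using m00 r by simp
  have s2: "s2 = 0" using m01 r by simp
  have s3: "s3 = 0" using m02 r by simp
  have s4: "s4 = 0" using m10 r by simp
  have s7: "s7 = 0" using m20 r s4 by simp
  have s5: "s5 = 1" using m11 r s1 s2 s3 by simp
  have s6: "s6 = 0" using m12 r s2 s3 by simp
  have s8: "s8 = 0" using m21 r s4 by simp
  have s9: "s9 = 1" using m33 r by simp
  show ?thesis using s1 s2 s3 s4 s5 s6 s7 s8 s9 by simp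
qed

lemma one_idx5: "4 \<le> n \<Longrightarrow> a < 5 \<Longrightarrow> b < 5 \<Longrightarrow> (1\<^sub>m (n+1) :: complex mat) $$ (a,b) = (if a = b then 1 else 0)"
  by simp

lemma R_bridge:
  fixes r1 r2 r3 r4 r5 r6 r7 r8 r9 :: complex
  assumes n: "4 \<le> n" and R: "R = mat_of_rows_list 3 [[r1,r2,r3],[r4,r5,r6],[r7,r8,r9]]"
  and hc: "blk n 1 R * blk n 3 R = blk n 3 R * blk n 1 R"
  and hq: "blk n 1 R * blk n 1 R = 1\<^sub>m (n+1)"
  and hb: "blk n 1 R * blk n 2 R * blk n 1 R = blk n 2 R * blk n 1 R * blk n 2 R"
  shows "RF1 r1 r2 r3 r4 r5 r6 r7 r8 r9 \<or> RF2 r1 r2 r3 r4 r5 r6 r7 r8 r9 \<or> RF3 r1 r2 r3 r4 r5 r6 r7 r8 r9 \<or>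
         RF4 r1 r2 r3 r4 r5 r6 r7 r8 r9 \<or> RI r1 r2 r3 r4 r5 r6 r7 r8 r9"
proof -
  have c02: "r1*r3 + -r3 = 0"
    using arg_cong[where f="\<lambda>M. M $$ (0,2)", OF hc, simplified mult_entry[OF n] loc_blk loc_mult, simplified blk_idx5[OF n] one_idx5[OF n], simplified, simplified R mat_of_rows_list_def, simplified]
    by (simp add: algebra_simps; blast)
  have c03: "r2*r3 = 0"
    using arg_cong[where f="\<lambda>M. M $$ (0,3)", OF hc, simplified mult_entry[OF n] loc_blk loc_mult, simplified blk_idx5[OF n] one_idx5[OF n], simplified, simplified R mat_of_rows_list_def, simplified]
    by (simp add: algebra_simps; blast)
  have c04: "r3*r3 = 0"
    using arg_cong[where f="\<lambda>M. M $$ (0,4)", OF hc, simplified mult_entry[OF n] loc_blk loc_mult, simplified blk_idx5[OF n] one_idx5[OF n], simplified, simplified R mat_of_rows_list_def, simplified]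
    by (simp add: algebra_simps; blast)
  have c12: "r1*r6 + -r6 = 0"
    using arg_cong[where f="\<lambda>M. M $$ (1,2)", OF hc, simplified mult_entry[OF n] loc_blk loc_mult, simplified blk_idx5[OF n] one_idx5[OF n], simplified, simplified R mat_of_rows_list_def, simplified]
    by (simp add: algebra_simps; blast)
  have c13: "r2*r6 = 0"
    using arg_cong[where f="\<lambda>M. M $$ (1,3)", OF hc, simplified mult_entry[OF n] loc_blk loc_mult, simplified blk_idx5[OF n] one_idx5[OF n], simplified, simplified R mat_of_rows_list_def, simplified]
    by (simp add: algebra_simps; blast)
  have c14: "r3*r6 = 0"
    using arg_cong[where f="\<lambda>M. M $$ (1,4)", OF hc, simplified mult_entry[OF n] loc_blk loc_mult, simplified blk_idx5[OF n] one_idx5[OF n], simplified, simplified R mat_of_rows_list_def, simplified]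
    by (simp add: algebra_simps; blast)
  have c20: "-r1*r7 + r7 = 0"
    using arg_cong[where f="\<lambda>M. M $$ (2,0)", OF hc, simplified mult_entry[OF n] loc_blk loc_mult, simplified blk_idx5[OF n] one_idx5[OF n], simplified, simplified R mat_of_rows_list_def, simplified]
    by (simp add: algebra_simps; blast)
  have c21: "-r1*r8 + r8 = 0"
    using arg_cong[where f="\<lambda>M. M $$ (2,1)", OF hc, simplified mult_entry[OF n] loc_blk loc_mult, simplified blk_idx5[OF n] one_idx5[OF n], simplified, simplified R mat_of_rows_list_def, simplified]
    by (simp add: algebra_simps; blast)
  have c23: "-r2 + r2*r9 = 0"
    using arg_cong[where f="\<lambda>M. M $$ (2,3)", OF hc, simplified mult_entry[OF n] loc_blk loc_mult, simplified blk_idx5[OF n] one_idx5[OF n], simplified, simplified R mat_of_rows_list_def, simplified]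
    by (simp add: algebra_simps; blast)
  have c24: "-r3 + r3*r9 = 0"
    using arg_cong[where f="\<lambda>M. M $$ (2,4)", OF hc, simplified mult_entry[OF n] loc_blk loc_mult, simplified blk_idx5[OF n] one_idx5[OF n], simplified, simplified R mat_of_rows_list_def, simplified]
    by (simp add: algebra_simps; blast)
  have c30: "-r4*r7 = 0"
    using arg_cong[where f="\<lambda>M. M $$ (3,0)", OF hc, simplified mult_entry[OF n] loc_blk loc_mult, simplified blk_idx5[OF n] one_idx5[OF n], simplified, simplified R mat_of_rows_list_def, simplified]
    by (simp add: algebra_simps; blast)
  have c31: "-r4*r8 = 0"
    using arg_cong[where f="\<lambda>M. M $$ (3,1)", OF hc, simplified mult_entry[OF n] loc_blk loc_mult, simplified blk_idx5[OF n] one_idx5[OF n], simplified, simplified R mat_of_rows_list_def, simplified]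
    by (simp add: algebra_simps; blast)
  have c32: "r4 + -r4*r9 = 0"
    using arg_cong[where f="\<lambda>M. M $$ (3,2)", OF hc, simplified mult_entry[OF n] loc_blk loc_mult, simplified blk_idx5[OF n] one_idx5[OF n], simplified, simplified R mat_of_rows_list_def, simplified]
    by (simp add: algebra_simps; blast)
  have c40: "-r7*r7 = 0"
    using arg_cong[where f="\<lambda>M. M $$ (4,0)", OF hc, simplified mult_entry[OF n] loc_blk loc_mult, simplified blk_idx5[OF n] one_idx5[OF n], simplified, simplified R mat_of_rows_list_def, simplified]
    by (simp add: algebra_simps; blast)
  have c41: "-r7*r8 = 0"
    using arg_cong[where f="\<lambda>M. M $$ (4,1)", OF hc, simplified mult_entry[OF n] loc_blk loc_mult, simplified blk_idx5[OF n] one_idx5[OF n], simplified, simplified R mat_of_rows_list_def, simplified]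
    by (simp add: algebra_simps; blast)
  have c42: "r7 + -r7*r9 = 0"
    using arg_cong[where f="\<lambda>M. M $$ (4,2)", OF hc, simplified mult_entry[OF n] loc_blk loc_mult, simplified blk_idx5[OF n] one_idx5[OF n], simplified, simplified R mat_of_rows_list_def, simplified]
    by (simp add: algebra_simps; blast)
  have q00: "(-1) + r1*r1 + r2*r4 + r3*r7 = 0"
    using arg_cong[where f="\<lambda>M. M $$ (0,0)", OF hq, simplified mult_entry[OF n] loc_blk loc_mult, simplified blk_idx5[OF n] one_idx5[OF n], simplified, simplified R mat_of_rows_list_def, simplified]
    by (simp add: algebra_simps; blast)
  have q01: "r1*r2 + r2*r5 + r3*r8 = 0"
    using arg_cong[where f="\<lambda>M. M $$ (0,1)", OF hq, simplified mult_entry[OF n] loc_blk loc_mult, simplified blk_idx5[OF n] one_idx5[OF n], simplified, simplified R mat_of_rows_list_def, simplified]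
    by (simp add: algebra_simps; blast)
  have q02: "r1*r3 + r2*r6 + r3*r9 = 0"
    using arg_cong[where f="\<lambda>M. M $$ (0,2)", OF hq, simplified mult_entry[OF n] loc_blk loc_mult, simplified blk_idx5[OF n] one_idx5[OF n], simplified, simplified R mat_of_rows_list_def, simplified]
    by (simp add: algebra_simps; blast)
  have q10: "r1*r4 + r4*r5 + r6*r7 = 0"
    using arg_cong[where f="\<lambda>M. M $$ (1,0)", OF hq, simplified mult_entry[OF n] loc_blk loc_mult, simplified blk_idx5[OF n] one_idx5[OF n], simplified, simplified R mat_of_rows_list_def, simplified]
    by (simp add: algebra_simps; blast)
  have q11: "(-1) + r2*r4 + r5*r5 + r6*r8 = 0"
    using arg_cong[where f="\<lambda>M. M $$ (1,1)", OF hq, simplified mult_entry[OF n] loc_blk loc_mult, simplified blk_idx5[OF n] one_idx5[OF n], simplified, simplified R mat_of_rows_list_def, simplified]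
    by (simp add: algebra_simps; blast)
  have q12: "r3*r4 + r5*r6 + r6*r9 = 0"
    using arg_cong[where f="\<lambda>M. M $$ (1,2)", OF hq, simplified mult_entry[OF n] loc_blk loc_mult, simplified blk_idx5[OF n] one_idx5[OF n], simplified, simplified R mat_of_rows_list_def, simplified]
    by (simp add: algebra_simps; blast)
  have q20: "r1*r7 + r4*r8 + r7*r9 = 0"
    using arg_cong[where f="\<lambda>M. M $$ (2,0)", OF hq, simplified mult_entry[OF n] loc_blk loc_mult, simplified blk_idx5[OF n] one_idx5[OF n], simplified, simplified R mat_of_rows_list_def, simplified]
    by (simp add: algebra_simps; blast)
  have q21: "r2*r7 + r5*r8 + r8*r9 = 0"
    using arg_cong[where f="\<lambda>M. M $$ (2,1)", OF hq, simplified mult_entry[OF n] loc_blk loc_mult, simplified blk_idx5[OF n] one_idx5[OF n], simplified, simplified R mat_of_rows_list_def, simplified]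
    by (simp add: algebra_simps; blast)
  have q22: "(-1) + r3*r7 + r6*r8 + r9*r9 = 0"
    using arg_cong[where f="\<lambda>M. M $$ (2,2)", OF hq, simplified mult_entry[OF n] loc_blk loc_mult, simplified blk_idx5[OF n] one_idx5[OF n], simplified, simplified R mat_of_rows_list_def, simplified]
    by (simp add: algebra_simps; blast)
  have b00: "-r1 + r1*r2*r4 + r1*r1 + r2*r2*r7 + r3*r4*r4 + r3*r5*r7 = 0"
    using arg_cong[where f="\<lambda>M. M $$ (0,0)", OF hb, simplified mult_entry[OF n] loc_blk loc_mult, simplified blk_idx5[OF n] one_idx5[OF n], simplified, simplified R mat_of_rows_list_def, simplified]
    by (simp add: algebra_simps; blast)
  have b01: "r1*r2*r5 + r2*r2*r8 + -r3*r4 + r3*r4*r5 + r3*r5*r8 = 0"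
    using arg_cong[where f="\<lambda>M. M $$ (0,1)", OF hb, simplified mult_entry[OF n] loc_blk loc_mult, simplified blk_idx5[OF n] one_idx5[OF n], simplified, simplified R mat_of_rows_list_def, simplified]
    by (simp add: algebra_simps; blast)
  have b02: "r1*r2*r6 + r1*r3 + -r2*r2 + r2*r2*r9 + r3*r4*r6 + -r3*r5 + r3*r5*r9 = 0"
    using arg_cong[where f="\<lambda>M. M $$ (0,2)", OF hb, simplified mult_entry[OF n] loc_blk loc_mult, simplified blk_idx5[OF n] one_idx5[OF n], simplified, simplified R mat_of_rows_list_def, simplified]
    by (simp add: algebra_simps; blast)
  have b10: "r1*r4*r5 + r2*r5*r7 + -r2*r7 + r4*r4*r6 + r5*r6*r7 = 0"
    using arg_cong[where f="\<lambda>M. M $$ (1,0)", OF hb, simplified mult_entry[OF n] loc_blk loc_mult, simplified blk_idx5[OF n] one_idx5[OF n], simplified, simplified R mat_of_rows_list_def, simplified]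
    by (simp add: algebra_simps; blast)
  have b11: "-r1*r2*r8 + -r1*r4*r6 + r1*r5*r5 + -r1*r1*r5 + r2*r4 + -r2*r4*r9 + r2*r5*r8 + -r3*r7 + r4*r5*r6 + r5*r6*r8 = 0"
    using arg_cong[where f="\<lambda>M. M $$ (1,1)", OF hb, simplified mult_entry[OF n] loc_blk loc_mult, simplified blk_idx5[OF n] one_idx5[OF n], simplified, simplified R mat_of_rows_list_def, simplified]
    by (simp add: algebra_simps; blast)
  have b12: "-r1*r2*r5 + -r2*r2*r8 + r3*r4 + -r3*r8 + r4*r6*r6 + r5*r6*r9 = 0"
    using arg_cong[where f="\<lambda>M. M $$ (1,2)", OF hb, simplified mult_entry[OF n] loc_blk loc_mult, simplified blk_idx5[OF n] one_idx5[OF n], simplified, simplified R mat_of_rows_list_def, simplified]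
    by (simp add: algebra_simps; blast)
  have b13: "-r1*r3*r5 + -r1*r6*r6 + -r2*r3*r8 + -r2*r6*r9 + r3*r5 + -r3*r9 + r6*r6 = 0"
    using arg_cong[where f="\<lambda>M. M $$ (1,3)", OF hb, simplified mult_entry[OF n] loc_blk loc_mult, simplified blk_idx5[OF n] one_idx5[OF n], simplified, simplified R mat_of_rows_list_def, simplified]
    by (simp add: algebra_simps; blast)
  have b20: "r1*r4*r8 + r1*r7 + r2*r7*r8 + -r4*r4 + r4*r4*r9 + -r5*r7 + r5*r7*r9 = 0"
    using arg_cong[where f="\<lambda>M. M $$ (2,0)", OF hb, simplified mult_entry[OF n] loc_blk loc_mult, simplified blk_idx5[OF n] one_idx5[OF n], simplified, simplified R mat_of_rows_list_def, simplified]
    by (simp add: algebra_simps; blast)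
  have b21: "-r1*r4*r5 + r2*r7 + r2*r8*r8 + -r4*r4*r6 + r5*r8*r9 + -r6*r7 = 0"
    using arg_cong[where f="\<lambda>M. M $$ (2,1)", OF hb, simplified mult_entry[OF n] loc_blk loc_mult, simplified blk_idx5[OF n] one_idx5[OF n], simplified, simplified R mat_of_rows_list_def, simplified]
    by (simp add: algebra_simps; blast)
  have b22: "r1*r6*r8 + -r2*r4*r5 + -r2*r5*r8 + r2*r8*r9 + r3*r7 + -r4*r5*r6 + r4*r6*r9 + r5*r9*r9 + -r5*r5*r9 + -r6*r8 = 0"
    using arg_cong[where f="\<lambda>M. M $$ (2,2)", OF hb, simplified mult_entry[OF n] loc_blk loc_mult, simplified blk_idx5[OF n] one_idx5[OF n], simplified, simplified R mat_of_rows_list_def, simplified]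
    by (simp add: algebra_simps; blast)
  have b23: "-r3*r4*r5 + -r3*r5*r8 + r3*r8 + -r4*r6*r6 + -r5*r6*r9 = 0"
    using arg_cong[where f="\<lambda>M. M $$ (2,3)", OF hb, simplified mult_entry[OF n] loc_blk loc_mult, simplified blk_idx5[OF n] one_idx5[OF n], simplified, simplified R mat_of_rows_list_def, simplified]
    by (simp add: algebra_simps; blast)
  have b31: "-r1*r5*r7 + -r1*r8*r8 + -r4*r6*r7 + -r4*r8*r9 + r5*r7 + -r7*r9 + r8*r8 = 0"
    using arg_cong[where f="\<lambda>M. M $$ (3,1)", OF hb, simplified mult_entry[OF n] loc_blk loc_mult, simplified blk_idx5[OF n] one_idx5[OF n], simplified, simplified R mat_of_rows_list_def, simplified]
    by (simp add: algebra_simps; blast)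
  have b32: "-r2*r5*r7 + -r2*r8*r8 + -r5*r6*r7 + -r5*r8*r9 + r6*r7 = 0"
    using arg_cong[where f="\<lambda>M. M $$ (3,2)", OF hb, simplified mult_entry[OF n] loc_blk loc_mult, simplified blk_idx5[OF n] one_idx5[OF n], simplified, simplified R mat_of_rows_list_def, simplified]
    by (simp add: algebra_simps; blast)
  have b33: "-r3*r5*r7 + -r3*r8*r8 + -r6*r8*r9 + -r6*r6*r7 + r9 + -r9*r9 = 0"
    using arg_cong[where f="\<lambda>M. M $$ (3,3)", OF hb, simplified mult_entry[OF n] loc_blk loc_mult, simplified blk_idx5[OF n] one_idx5[OF n], simplified, simplified R mat_of_rows_list_def, simplified]
    by (simp add: algebra_simps; blast)
  show ?thesis by (rule R_cls[OF c02 c03 c04 c12 c13 c14 c20 c21 c23 c24 c30 c31 c32 c40 c41 c42 q00 q01 q02 q10 q11 q12 q20 q21 q22 b00 b01 b02 b10 b11 b12 b13 b20 b21 b22 b23 b31 b32 b33])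
qed

lemma S_bridge:
  fixes r1 r2 r3 r4 r5 r6 r7 r8 r9 s1 s2 s3 s4 s5 s6 s7 s8 s9 :: complex
  assumes n: "4 \<le> n" and R: "R = mat_of_rows_list 3 [[r1,r2,r3],[r4,r5,r6],[r7,r8,r9]]"
  and S: "S = mat_of_rows_list 3 [[s1,s2,s3],[s4,s5,s6],[s7,s8,s9]]"
  and hx: "blk n 1 S * blk n 3 R = blk n 3 R * blk n 1 S"
  and hy: "blk n 3 S * blk n 1 R = blk n 1 R * blk n 3 S"
  and hm: "blk n 1 R * blk n 2 R * blk n 1 S = blk n 2 S * blk n 1 R * blk n 2 R"
  shows "(RF1 r1 r2 r3 r4 r5 r6 r7 r8 r9 \<longrightarrow> s1=1 \<and> s2=0 \<and> s3=0 \<and> s4=0 \<and> s7=0) \<and>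
    (RF2 r1 r2 r3 r4 r5 r6 r7 r8 r9 \<longrightarrow> s3=0 \<and> s6=0 \<and> s7=0 \<and> s8=0 \<and> s9=1) \<and>
    (RF3 r1 r2 r3 r4 r5 r6 r7 r8 r9 \<longrightarrow> s1=1 \<and> s2=0 \<and> s3=0 \<and> s7=0 \<and> s8=0 \<and> s9=1 \<and> s6 = r6*(1 - r6*s4 - s5)) \<and>
    (RF4 r1 r2 r3 r4 r5 r6 r7 r8 r9 \<longrightarrow> s1=1 \<and> s3=0 \<and> s4=0 \<and> s6=0 \<and> s7=0 \<and> s9=1 \<and> s2 = r2*(1 - s5 - r2*s8)) \<and>
    (RI r1 r2 r3 r4 r5 r6 r7 r8 r9 \<longrightarrow> s1=1 \<and> s2=0 \<and> s3=0 \<and> s4=0 \<and> s5=1 \<and> s6=0 \<and> s7=0 \<and> s8=0 \<and> s9=1)"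
proof -
  have x02: "r1*s3 + -s3 = 0"
    using arg_cong[where f="\<lambda>M. M $$ (0,2)", OF hx, simplified mult_entry[OF n] loc_blk loc_mult, simplified blk_idx5[OF n] one_idx5[OF n], simplified, simplified R S mat_of_rows_list_def, simplified]
    by (simp add: algebra_simps; blast)
  have x03: "r2*s3 = 0"
    using arg_cong[where f="\<lambda>M. M $$ (0,3)", OF hx, simplified mult_entry[OF n] loc_blk loc_mult, simplified blk_idx5[OF n] one_idx5[OF n], simplified, simplified R S mat_of_rows_list_def, simplified]
    by (simp add: algebra_simps; blast)
  have x12: "r1*s6 + -s6 = 0"
    using arg_cong[where f="\<lambda>M. M $$ (1,2)", OF hx, simplified mult_entry[OF n] loc_blk loc_mult, simplified blk_idx5[OF n] one_idx5[OF n], simplified, simplified R S mat_of_rows_list_def, simplified]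
    by (simp add: algebra_simps; blast)
  have x13: "r2*s6 = 0"
    using arg_cong[where f="\<lambda>M. M $$ (1,3)", OF hx, simplified mult_entry[OF n] loc_blk loc_mult, simplified blk_idx5[OF n] one_idx5[OF n], simplified, simplified R S mat_of_rows_list_def, simplified]
    by (simp add: algebra_simps; blast)
  have x20: "-r1*s7 + s7 = 0"
    using arg_cong[where f="\<lambda>M. M $$ (2,0)", OF hx, simplified mult_entry[OF n] loc_blk loc_mult, simplified blk_idx5[OF n] one_idx5[OF n], simplified, simplified R S mat_of_rows_list_def, simplified]
    by (simp add: algebra_simps; blast)
  have x21: "-r1*s8 + s8 = 0"
    using arg_cong[where f="\<lambda>M. M $$ (2,1)", OF hx, simplified mult_entry[OF n] loc_blk loc_mult, simplified blk_idx5[OF n] one_idx5[OF n], simplified, simplified R S mat_of_rows_list_def, simplified]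
    by (simp add: algebra_simps; blast)
  have x23: "-r2 + r2*s9 = 0"
    using arg_cong[where f="\<lambda>M. M $$ (2,3)", OF hx, simplified mult_entry[OF n] loc_blk loc_mult, simplified blk_idx5[OF n] one_idx5[OF n], simplified, simplified R S mat_of_rows_list_def, simplified]
    by (simp add: algebra_simps; blast)
  have y21: "-r8 + r8*s1 = 0"
    using arg_cong[where f="\<lambda>M. M $$ (2,1)", OF hy, simplified mult_entry[OF n] loc_blk loc_mult, simplified blk_idx5[OF n] one_idx5[OF n], simplified, simplified R S mat_of_rows_list_def, simplified]
    by (simp add: algebra_simps; blast)
  have y23: "-r9*s2 + s2 = 0"
    using arg_cong[where f="\<lambda>M. M $$ (2,3)", OF hy, simplified mult_entry[OF n] loc_blk loc_mult, simplified blk_idx5[OF n] one_idx5[OF n], simplified, simplified R S mat_of_rows_list_def, simplified]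
    by (simp add: algebra_simps; blast)
  have y24: "-r9*s3 + s3 = 0"
    using arg_cong[where f="\<lambda>M. M $$ (2,4)", OF hy, simplified mult_entry[OF n] loc_blk loc_mult, simplified blk_idx5[OF n] one_idx5[OF n], simplified, simplified R S mat_of_rows_list_def, simplified]
    by (simp add: algebra_simps; blast)
  have y31: "r8*s4 = 0"
    using arg_cong[where f="\<lambda>M. M $$ (3,1)", OF hy, simplified mult_entry[OF n] loc_blk loc_mult, simplified blk_idx5[OF n] one_idx5[OF n], simplified, simplified R S mat_of_rows_list_def, simplified]
    by (simp add: algebra_simps; blast)
  have y32: "r9*s4 + -s4 = 0"
    using arg_cong[where f="\<lambda>M. M $$ (3,2)", OF hy, simplified mult_entry[OF n] loc_blk loc_mult, simplified blk_idx5[OF n] one_idx5[OF n], simplified, simplified R S mat_of_rows_list_def, simplified]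
    by (simp add: algebra_simps; blast)
  have y42: "r9*s7 + -s7 = 0"
    using arg_cong[where f="\<lambda>M. M $$ (4,2)", OF hy, simplified mult_entry[OF n] loc_blk loc_mult, simplified blk_idx5[OF n] one_idx5[OF n], simplified, simplified R S mat_of_rows_list_def, simplified]
    by (simp add: algebra_simps; blast)
  have m00: "-r1 + r1*r2*s4 + r1*s1 + r2*r2*s7 + r3*r4*s4 + r3*r5*s7 = 0"
    using arg_cong[where f="\<lambda>M. M $$ (0,0)", OF hm, simplified mult_entry[OF n] loc_blk loc_mult, simplified blk_idx5[OF n] one_idx5[OF n], simplified, simplified R S mat_of_rows_list_def, simplified]
    by (simp add: algebra_simps; blast)
  have m01: "-r1*r2 + r1*r2*s5 + r1*s2 + r2*r2*s8 + -r3*r4 + r3*r4*s5 + r3*r5*s8 = 0"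
    using arg_cong[where f="\<lambda>M. M $$ (0,1)", OF hm, simplified mult_entry[OF n] loc_blk loc_mult, simplified blk_idx5[OF n] one_idx5[OF n], simplified, simplified R S mat_of_rows_list_def, simplified]
    by (simp add: algebra_simps; blast)
  have m02: "r1*r2*s6 + r1*s3 + -r2*r2 + r2*r2*s9 + r3*r4*s6 + -r3*r5 + r3*r5*s9 = 0"
    using arg_cong[where f="\<lambda>M. M $$ (0,2)", OF hm, simplified mult_entry[OF n] loc_blk loc_mult, simplified blk_idx5[OF n] one_idx5[OF n], simplified, simplified R S mat_of_rows_list_def, simplified]
    by (simp add: algebra_simps; blast)
  have m10: "r1*r5*s4 + r2*r5*s7 + r4*r6*s4 + r5*r6*s7 + -r7*s2 = 0"
    using arg_cong[where f="\<lambda>M. M $$ (1,0)", OF hm, simplified mult_entry[OF n] loc_blk loc_mult, simplified blk_idx5[OF n] one_idx5[OF n], simplified, simplified R S mat_of_rows_list_def, simplified]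
    by (simp add: algebra_simps; blast)
  have m11: "-r1*r5*s1 + r1*r5*s5 + -r1*r8*s2 + r2*r5*s8 + -r4*r6*s1 + r4*r6*s5 + -r4*r9*s2 + r4*s2 + r5*r6*s8 + -r7*s3 = 0"
    using arg_cong[where f="\<lambda>M. M $$ (1,1)", OF hm, simplified mult_entry[OF n] loc_blk loc_mult, simplified blk_idx5[OF n] one_idx5[OF n], simplified, simplified R S mat_of_rows_list_def, simplified]
    by (simp add: algebra_simps; blast)
  have m12: "r1*r5*s6 + -r2*r5*s1 + r2*r5*s9 + -r2*r8*s2 + r4*r6*s6 + r4*s3 + -r5*r6*s1 + r5*r6*s9 + -r5*r9*s2 + -r8*s3 = 0"
    using arg_cong[where f="\<lambda>M. M $$ (1,2)", OF hm, simplified mult_entry[OF n] loc_blk loc_mult, simplified blk_idx5[OF n] one_idx5[OF n], simplified, simplified R S mat_of_rows_list_def, simplified]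
    by (simp add: algebra_simps; blast)
  have m20: "r1*r8*s4 + r2*r8*s7 + r4*r9*s4 + -r4*s4 + r5*r9*s7 + r7*s1 + -r7*s5 = 0"
    using arg_cong[where f="\<lambda>M. M $$ (2,0)", OF hm, simplified mult_entry[OF n] loc_blk loc_mult, simplified blk_idx5[OF n] one_idx5[OF n], simplified, simplified R S mat_of_rows_list_def, simplified]
    by (simp add: algebra_simps; blast)
  have m21: "-r1*r5*s4 + r2*r8*s8 + -r4*r6*s4 + r5*r9*s8 + r7*s2 + -r7*s6 = 0"
    using arg_cong[where f="\<lambda>M. M $$ (2,1)", OF hm, simplified mult_entry[OF n] loc_blk loc_mult, simplified blk_idx5[OF n] one_idx5[OF n], simplified, simplified R S mat_of_rows_list_def, simplified]
    by (simp add: algebra_simps; blast)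
  have m22: "r1*r8*s6 + -r2*r5*s4 + -r2*r8*s5 + r2*r8*s9 + r4*r9*s6 + -r5*r6*s4 + -r5*r9*s5 + r5*r9*s9 + r7*s3 + -r8*s6 = 0"
    using arg_cong[where f="\<lambda>M. M $$ (2,2)", OF hm, simplified mult_entry[OF n] loc_blk loc_mult, simplified blk_idx5[OF n] one_idx5[OF n], simplified, simplified R S mat_of_rows_list_def, simplified]
    by (simp add: algebra_simps; blast)
  have m23: "-r3*r5*s4 + r3*r8 + -r3*r8*s5 + r6*r9 + -r6*r9*s5 + -r6*r6*s4 + -r9*s6 = 0"
    using arg_cong[where f="\<lambda>M. M $$ (2,3)", OF hm, simplified mult_entry[OF n] loc_blk loc_mult, simplified blk_idx5[OF n] one_idx5[OF n], simplified, simplified R S mat_of_rows_list_def, simplified]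
    by (simp add: algebra_simps; blast)
  have m31: "-r1*r5*s7 + -r1*r8*s8 + -r4*r6*s7 + -r4*r9*s8 + r7*s5 + -r7*s9 + r8*s8 = 0"
    using arg_cong[where f="\<lambda>M. M $$ (3,1)", OF hm, simplified mult_entry[OF n] loc_blk loc_mult, simplified blk_idx5[OF n] one_idx5[OF n], simplified, simplified R S mat_of_rows_list_def, simplified]
    by (simp add: algebra_simps; blast)
  have m32: "-r2*r5*s7 + -r2*r8*s8 + -r5*r6*s7 + -r5*r9*s8 + r7*s6 = 0"
    using arg_cong[where f="\<lambda>M. M $$ (3,2)", OF hm, simplified mult_entry[OF n] loc_blk loc_mult, simplified blk_idx5[OF n] one_idx5[OF n], simplified, simplified R S mat_of_rows_list_def, simplified]
    by (simp add: algebra_simps; blast)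
  have m33: "-r3*r5*s7 + -r3*r8*s8 + -r6*r9*s8 + -r6*r6*s7 + r9 + -r9*s9 = 0"
    using arg_cong[where f="\<lambda>M. M $$ (3,3)", OF hm, simplified mult_entry[OF n] loc_blk loc_mult, simplified blk_idx5[OF n] one_idx5[OF n], simplified, simplified R S mat_of_rows_list_def, simplified]
    by (simp add: algebra_simps; blast)
  have 1: "RF1 r1 r2 r3 r4 r5 r6 r7 r8 r9 \<longrightarrow> s1=1 \<and> s2=0 \<and> s3=0 \<and> s4=0 \<and> s7=0"
    by (rule impI, erule S_F1[OF x02 x03 x12 x13 x20 x21 x23 y21 y23 y24 y31 y32 y42 m00 m01 m02 m10 m11 m12 m20 m21 m22 m23 m31 m32 m33])
  have 2: "RF2 r1 r2 r3 r4 r5 r6 r7 r8 r9 \<longrightarrow> s3=0 \<and> s6=0 \<and> s7=0 \<and> s8=0 \<and> s9=1"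
    by (rule impI, erule S_F2[OF x02 x03 x12 x13 x20 x21 x23 y21 y23 y24 y31 y32 y42 m00 m01 m02 m10 m11 m12 m20 m21 m22 m23 m31 m32 m33])
  have 3: "RF3 r1 r2 r3 r4 r5 r6 r7 r8 r9 \<longrightarrow> s1=1 \<and> s2=0 \<and> s3=0 \<and> s7=0 \<and> s8=0 \<and> s9=1 \<and> s6 = r6*(1 - r6*s4 - s5)"
    by (rule impI, erule S_F3[OF x02 x03 x12 x13 x20 x21 x23 y21 y23 y24 y31 y32 y42 m00 m01 m02 m10 m11 m12 m20 m21 m22 m23 m31 m32 m33])
  have 4: "RF4 r1 r2 r3 r4 r5 r6 r7 r8 r9 \<longrightarrow> s1=1 \<and> s3=0 \<and> s4=0 \<and> s6=0 \<and> s7=0 \<and> s9=1 \<and> s2 = r2*(1 - s5 - r2*s8)"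
    by (rule impI, erule S_F4[OF x02 x03 x12 x13 x20 x21 x23 y21 y23 y24 y31 y32 y42 m00 m01 m02 m10 m11 m12 m20 m21 m22 m23 m31 m32 m33])
  have 5: "RI r1 r2 r3 r4 r5 r6 r7 r8 r9 \<longrightarrow> s1=1 \<and> s2=0 \<and> s3=0 \<and> s4=0 \<and> s5=1 \<and> s6=0 \<and> s7=0 \<and> s8=0 \<and> s9=1"
    by (rule impI, erule S_I[OF x02 x03 x12 x13 x20 x21 x23 y21 y23 y24 y31 y32 y42 m00 m01 m02 m10 m11 m12 m20 m21 m22 m23 m31 m32 m33])
  show ?thesis by (rule conjI[OF 1 conjI[OF 2 conjI[OF 3 conjI[OF 4 5]]]])
qed

lemma inv3: assumes "invertible_mat S" "S \<in> carrier_mat 3 3"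
  shows "\<exists>B. B \<in> carrier_mat 3 3 \<and> B * S = 1\<^sub>m 3 \<and> S * B = 1\<^sub>m 3"
proof -
  obtain B where B1: "S * B = 1\<^sub>m (dim_row S)" and B2: "B * S = 1\<^sub>m (dim_row B)"
    using assms(1) unfolding invertible_mat_def inverts_mat_def by blast
  have "dim_col (B * S) = 3" using assms(2) by simp
  then have rB: "dim_row B = 3" using B2 by simp
  have "dim_col (S * B) = dim_col B" by simp
  then have cB: "dim_col B = 3" using B1 assms(2) by simp
  show ?thesis using B1 B2 rB cB assms(2) by (intro exI[of _ B]) auto
qed

lemma prod3: "B \<in> carrier_mat 3 3 \<Longrightarrow> S \<in> carrier_mat 3 3 \<Longrightarrow> i < 3 \<Longrightarrow> j < 3 \<Longrightarrow>
  (B * S) $$ (i,j) = B$$(i,0)*S$$(0,j) + B$$(i,1)*S$$(1,j) + B$$(i,2)*S$$(2,j)"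
  by (simp add: scalar_prod_def numeral_eq_Suc)

lemma C3': "length xs = 3 \<Longrightarrow> mat_of_rows_list 3 xs \<in> carrier_mat 3 3"
  by (simp add: mat_of_rows_list_def)
lemma C3: "mat_of_rows_list 3 [[a,b,c],[d,e,f],[g,h,k]] \<in> carrier_mat 3 3"
  by (rule C3') simp

lemma S3_idx: "i < 3 \<Longrightarrow> j < 3 \<Longrightarrow> mat_of_rows_list 3 [[a,b,c],[d,e,f],[g,h,k]] $$ (i,j) = [[a,b,c],[d,e,f],[g,h,k]] ! i ! j"
  by (simp add: mat_of_rows_list_def)

lemma det2x2: fixes a b c d b11 b12 b21 b22 :: complex
  assumes e11: "b11*a + b12*c = 1" and e12: "b11*b + b12*d = 0" and e21: "b21*a + b22*c = 0" and e22: "b21*b + b22*d = 1"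
  shows "a*d - b*c \<noteq> 0"
proof -
  have "(a*d - b*c) * (b11*b22 - b12*b21) =
     (b11*a + b12*c)*(b21*b + b22*d) - (b11*b + b12*d)*(b21*a + b22*c)"
    by (simp add: algebra_simps)
  then have "(a*d - b*c) * (b11*b22 - b12*b21) = 1" unfolding e11 e12 e21 e22 by simp
  then show ?thesis by auto
qed

lemma det1: assumes "invertible_mat (mat_of_rows_list 3 [[1,0,0],[0,a,b],[0,c,d]])"
  shows "a*d - b*c \<noteq> (0::complex)"
proof -
  let ?S = "mat_of_rows_list 3 [[1,0,0],[0,a,b],[0,c,d]] :: complex mat"
  have C: "?S \<in> carrier_mat 3 3" by (rule C3)
  obtain B where B: "B \<in> carrier_mat 3 3" "B * ?S = 1\<^sub>m 3" using inv3[OF assms C] by auto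
  have e: "(B * ?S) $$ (i,j) = (if i = j then 1 else 0)" if "i<3" "j<3" for i j using B(2) that by simp
  have e11: "B$$(1,1)*a + B$$(1,2)*c = 1" using e[of 1 1] prod3[OF B(1) C, of 1 1] by (simp add: S3_idx)
  have e12: "B$$(1,1)*b + B$$(1,2)*d = 0" using e[of 1 2] prod3[OF B(1) C, of 1 2] by (simp add: S3_idx)
  have e21: "B$$(2,1)*a + B$$(2,2)*c = 0" using e[of 2 1] prod3[OF B(1) C, of 2 1] by (simp add: S3_idx)
  have e22: "B$$(2,1)*b + B$$(2,2)*d = 1" using e[of 2 2] prod3[OF B(1) C, of 2 2] by (simp add: S3_idx)
  show ?thesis by (rule det2x2[OF e11 e12 e21 e22])
qed

lemma det2: assumes "invertible_mat (mat_of_rows_list 3 [[a,b,0],[c,d,0],[0,0,1]])"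
  shows "a*d - b*c \<noteq> (0::complex)"
proof -
  let ?S = "mat_of_rows_list 3 [[a,b,0],[c,d,0],[0,0,1]] :: complex mat"
  have C: "?S \<in> carrier_mat 3 3" by (rule C3)
  obtain B where B: "B \<in> carrier_mat 3 3" "B * ?S = 1\<^sub>m 3" using inv3[OF assms C] by auto
  have e: "(B * ?S) $$ (i,j) = (if i = j then 1 else 0)" if "i<3" "j<3" for i j using B(2) that by simp
  have e11: "B$$(0,0)*a + B$$(0,1)*c = 1" using e[of 0 0] prod3[OF B(1) C, of 0 0] by (simp add: S3_idx)
  have e12: "B$$(0,0)*b + B$$(0,1)*d = 0" using e[of 0 1] prod3[OF B(1) C, of 0 1] by (simp add: S3_idx)
  have e21: "B$$(1,0)*a + B$$(1,1)*c = 0" using e[of 1 0] prod3[OF B(1) C, of 1 0] by (simp add: S3_idx)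
  have e22: "B$$(1,0)*b + B$$(1,1)*d = 1" using e[of 1 1] prod3[OF B(1) C, of 1 1] by (simp add: S3_idx)
  show ?thesis by (rule det2x2[OF e11 e12 e21 e22])
qed

lemma det3: assumes "invertible_mat (mat_of_rows_list 3 [[1,0,0],[a,b,c],[0,0,1]])"
  shows "b \<noteq> (0::complex)"
proof
  assume b: "b = 0"
  let ?S = "mat_of_rows_list 3 [[1,0,0],[a,b,c],[0,0,1]] :: complex mat"
  have C: "?S \<in> carrier_mat 3 3" by (rule C3)
  obtain B where B: "B \<in> carrier_mat 3 3" "B * ?S = 1\<^sub>m 3" using inv3[OF assms C] by auto
  have "(B * ?S) $$ (1,1) = 1" using B(2) by simp
  then show False using prod3[OF B(1) C, of 1 1] b by (simp add: S3_idx)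
qed

lemma det4: assumes "invertible_mat (mat_of_rows_list 3 [[1,a,0],[0,b,0],[0,c,1]])"
  shows "b \<noteq> (0::complex)"
proof
  assume b: "b = 0"
  let ?S = "mat_of_rows_list 3 [[1,a,0],[0,b,0],[0,c,1]] :: complex mat"
  have C: "?S \<in> carrier_mat 3 3" by (rule C3)
  obtain B where B: "B \<in> carrier_mat 3 3" "?S * B = 1\<^sub>m 3" using inv3[OF assms C] by auto
  have "(?S * B) $$ (1,1) = 1" using B(2) by simp
  then show False using prod3[OF C B(1), of 1 1] b by (simp add: S3_idx)
qed

lemma mat_id3: "mat_of_rows_list 3 [[1,0,0],[0,1,0],[0,0,1]] = (1\<^sub>m 3 :: complex mat)"
  using mat3[of "1\<^sub>m 3 :: complex mat"] by simp

lemma blk_one: "blk n i (1\<^sub>m 3) = (1\<^sub>m (n+1) :: complex mat)"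
  by (rule eq_matI) (auto simp: blk_def)

lemma invertible_one: "invertible_mat (1\<^sub>m N :: complex mat)"
  unfolding invertible_mat_def inverts_mat_def by (auto intro!: exI[of _ "1\<^sub>m N"])

lemma fam1_intro:
  fixes r1 r2 r3 r4 r5 r6 r7 r8 r9 s1 s2 s3 s4 s5 s6 s7 s8 s9 t1 t2 t3 t4 t5 t6 t7 t8 t9 :: complex
  assumes RF: "RF1 r1 r2 r3 r4 r5 r6 r7 r8 r9"
  and R: "R = mat_of_rows_list 3 [[r1,r2,r3],[r4,r5,r6],[r7,r8,r9]]"
  and S1: "S1 = mat_of_rows_list 3 [[s1,s2,s3],[s4,s5,s6],[s7,s8,s9]]"
  and S2: "S2 = mat_of_rows_list 3 [[t1,t2,t3],[t4,t5,t6],[t7,t8,t9]]"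
  and s: "s1=1 \<and> s2=0 \<and> s3=0 \<and> s4=0 \<and> s7=0"
  and t: "t1=1 \<and> t2=0 \<and> t3=0 \<and> t4=0 \<and> t7=0"
  and i1: "invertible_mat S1" and i2: "invertible_mat S2"
  shows "fam1 R S1 S2"
proof -
  have r: "r1=1" "r2=0" "r3=0" "r4=0" "r5=0" "r7=0" "r9=0" "r6*r8=1" using RF unfolding RF1_def by auto
  have r6: "r6 \<noteq> 0" using r(8) by auto
  have r8: "r8 = 1/r6" using r(8) r6 by (simp add: field_simps)
  have RR: "R = mat_of_rows_list 3 [[1,0,0],[0,0,r6],[0,1/r6,0]]" using R r r8 by simp
  have SS1: "S1 = mat_of_rows_list 3 [[1,0,0],[0,s5,s6],[0,s8,s9]]" using S1 s by simp
  have SS2: "S2 = mat_of_rows_list 3 [[1,0,0],[0,t5,t6],[0,t8,t9]]" using S2 t by simp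
  have d1: "s5*s9 - s6*s8 \<noteq> 0" using i1 unfolding SS1 by (rule det1)
  have d2: "t5*t9 - t6*t8 \<noteq> 0" using i2 unfolding SS2 by (rule det1)
  have A: "S \<in> {S1,S2} \<Longrightarrow> S = S1 \<or> S = S2" for S by simp
  show ?thesis unfolding fam1_def
    apply (rule exI[of _ r6])
    apply (intro conjI r6 RR ballI)
    apply (drule A)
    apply (erule disjE)
     apply (rule exI[of _ s5], rule exI[of _ s6], rule exI[of _ s8], rule exI[of _ s9], intro conjI d1, simp add: SS1)
    apply (rule exI[of _ t5], rule exI[of _ t6], rule exI[of _ t8], rule exI[of _ t9], intro conjI d2, simp add: SS2)
    done
qed

lemma fam2_intro:
  fixes r1 r2 r3 r4 r5 r6 r7 r8 r9 s1 s2 s3 s4 s5 s6 s7 s8 s9 t1 t2 t3 t4 t5 t6 t7 t8 t9 :: complex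
  assumes RF: "RF2 r1 r2 r3 r4 r5 r6 r7 r8 r9"
  and R: "R = mat_of_rows_list 3 [[r1,r2,r3],[r4,r5,r6],[r7,r8,r9]]"
  and S1: "S1 = mat_of_rows_list 3 [[s1,s2,s3],[s4,s5,s6],[s7,s8,s9]]"
  and S2: "S2 = mat_of_rows_list 3 [[t1,t2,t3],[t4,t5,t6],[t7,t8,t9]]"
  and s: "s3=0 \<and> s6=0 \<and> s7=0 \<and> s8=0 \<and> s9=1"
  and t: "t3=0 \<and> t6=0 \<and> t7=0 \<and> t8=0 \<and> t9=1"
  and i1: "invertible_mat S1" and i2: "invertible_mat S2"
  shows "fam2 R S1 S2"
proof -
  have r: "r1=0" "r3=0" "r5=0" "r6=0" "r7=0" "r8=0" "r9=1" "r2*r4=1" using RF unfolding RF2_def by auto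
  have r2: "r2 \<noteq> 0" using r(8) by auto
  have r4: "r4 = 1/r2" using r(8) r2 by (simp add: field_simps)
  have RR: "R = mat_of_rows_list 3 [[0,r2,0],[1/r2,0,0],[0,0,1]]" using R r r4 by simp
  have SS1: "S1 = mat_of_rows_list 3 [[s1,s2,0],[s4,s5,0],[0,0,1]]" using S1 s by simp
  have SS2: "S2 = mat_of_rows_list 3 [[t1,t2,0],[t4,t5,0],[0,0,1]]" using S2 t by simp
  have d1: "s1*s5 - s2*s4 \<noteq> 0" using i1 unfolding SS1 by (rule det2)
  have d2: "t1*t5 - t2*t4 \<noteq> 0" using i2 unfolding SS2 by (rule det2)
  have A: "S \<in> {S1,S2} \<Longrightarrow> S = S1 \<or> S = S2" for S by simp
  show ?thesis unfolding fam2_def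
    apply (rule exI[of _ r2])
    apply (intro conjI r2 RR ballI)
    apply (drule A)
    apply (erule disjE)
     apply (rule exI[of _ s1], rule exI[of _ s2], rule exI[of _ s4], rule exI[of _ s5], intro conjI d1, simp add: SS1)
    apply (rule exI[of _ t1], rule exI[of _ t2], rule exI[of _ t4], rule exI[of _ t5], intro conjI d2, simp add: SS2)
    done
qed

lemma fam3_intro:
  fixes r1 r2 r3 r4 r5 r6 r7 r8 r9 s1 s2 s3 s4 s5 s6 s7 s8 s9 t1 t2 t3 t4 t5 t6 t7 t8 t9 :: complex
  assumes RF: "RF3 r1 r2 r3 r4 r5 r6 r7 r8 r9"
  and R: "R = mat_of_rows_list 3 [[r1,r2,r3],[r4,r5,r6],[r7,r8,r9]]"
  and S1: "S1 = mat_of_rows_list 3 [[s1,s2,s3],[s4,s5,s6],[s7,s8,s9]]"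
  and S2: "S2 = mat_of_rows_list 3 [[t1,t2,t3],[t4,t5,t6],[t7,t8,t9]]"
  and s: "s1=1 \<and> s2=0 \<and> s3=0 \<and> s7=0 \<and> s8=0 \<and> s9=1 \<and> s6 = r6*(1 - r6*s4 - s5)"
  and t: "t1=1 \<and> t2=0 \<and> t3=0 \<and> t7=0 \<and> t8=0 \<and> t9=1 \<and> t6 = r6*(1 - r6*t4 - t5)"
  and i1: "invertible_mat S1" and i2: "invertible_mat S2"
  shows "fam3 R S1 S2"
proof -
  have r: "r1=1" "r2=0" "r3=0" "r5= -1" "r7=0" "r8=0" "r9=1" "r4*r6=1" using RF unfolding RF3_def by auto
  have r6: "r6 \<noteq> 0" using r(8) by auto
  have r4: "r4 = 1/r6" using r(8) r6 by (simp add: field_simps)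
  have RR: "R = mat_of_rows_list 3 [[1,0,0],[1/r6,-1,r6],[0,0,1]]" using R r r4 by simp
  have SS1: "S1 = mat_of_rows_list 3 [[1,0,0],[s4,s5,r6*(1 - r6*s4 - s5)],[0,0,1]]" using S1 s by simp
  have SS2: "S2 = mat_of_rows_list 3 [[1,0,0],[t4,t5,r6*(1 - r6*t4 - t5)],[0,0,1]]" using S2 t by simp
  have d1: "s5 \<noteq> 0" using i1 unfolding SS1 by (rule det3)
  have d2: "t5 \<noteq> 0" using i2 unfolding SS2 by (rule det3)
  have A: "S \<in> {S1,S2} \<Longrightarrow> S = S1 \<or> S = S2" for S by simp
  show ?thesis unfolding fam3_def
    apply (rule exI[of _ r6])
    apply (intro conjI r6 RR ballI)
    apply (drule A)
    apply (erule disjE)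
     apply (rule exI[of _ s4], rule exI[of _ s5], intro conjI d1, simp add: SS1)
    apply (rule exI[of _ t4], rule exI[of _ t5], intro conjI d2, simp add: SS2)
    done
qed

lemma fam4_intro:
  fixes r1 r2 r3 r4 r5 r6 r7 r8 r9 s1 s2 s3 s4 s5 s6 s7 s8 s9 t1 t2 t3 t4 t5 t6 t7 t8 t9 :: complex
  assumes RF: "RF4 r1 r2 r3 r4 r5 r6 r7 r8 r9"
  and R: "R = mat_of_rows_list 3 [[r1,r2,r3],[r4,r5,r6],[r7,r8,r9]]"
  and S1: "S1 = mat_of_rows_list 3 [[s1,s2,s3],[s4,s5,s6],[s7,s8,s9]]"
  and S2: "S2 = mat_of_rows_list 3 [[t1,t2,t3],[t4,t5,t6],[t7,t8,t9]]"
  and s: "s1=1 \<and> s3=0 \<and> s4=0 \<and> s6=0 \<and> s7=0 \<and> s9=1 \<and> s2 = r2*(1 - s5 - r2*s8)"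
  and t: "t1=1 \<and> t3=0 \<and> t4=0 \<and> t6=0 \<and> t7=0 \<and> t9=1 \<and> t2 = r2*(1 - t5 - r2*t8)"
  and i1: "invertible_mat S1" and i2: "invertible_mat S2"
  shows "fam4 R S1 S2"
proof -
  have r: "r1=1" "r3=0" "r4=0" "r5= -1" "r6=0" "r7=0" "r9=1" "r2*r8=1" using RF unfolding RF4_def by auto
  have r2: "r2 \<noteq> 0" using r(8) by auto
  have r8: "r8 = 1/r2" using r(8) r2 by (simp add: field_simps)
  have RR: "R = mat_of_rows_list 3 [[1,r2,0],[0,-1,0],[0,1/r2,1]]" using R r r8 by simp
  have SS1: "S1 = mat_of_rows_list 3 [[1,r2*(1 - s5 - r2*s8),0],[0,s5,0],[0,s8,1]]" using S1 s by simp
  have SS2: "S2 = mat_of_rows_list 3 [[1,r2*(1 - t5 - r2*t8),0],[0,t5,0],[0,t8,1]]" using S2 t by simp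
  have d1: "s5 \<noteq> 0" using i1 unfolding SS1 by (rule det4)
  have d2: "t5 \<noteq> 0" using i2 unfolding SS2 by (rule det4)
  have A: "S \<in> {S1,S2} \<Longrightarrow> S = S1 \<or> S = S2" for S by simp
  show ?thesis unfolding fam4_def
    apply (rule exI[of _ r2])
    apply (intro conjI r2 RR ballI)
    apply (drule A)
    apply (erule disjE)
     apply (rule exI[of _ s5], rule exI[of _ s8], intro conjI d1, simp add: SS1)
    apply (rule exI[of _ t5], rule exI[of _ t8], intro conjI d2, simp add: SS2)
    done
qed

theorem theorem4p1:
  fixes n :: nat and R S1 S2 :: "complex mat"
  assumes "n \<ge> 4"
    and "R \<in> carrier_mat 3 3" "S1 \<in> carrier_mat 3 3" "S2 \<in> carrier_mat 3 3"
    and "invertible_mat R" "invertible_mat S1" "invertible_mat S2"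
    and "UV2_rep n (\<lambda>i. blk n i R) (\<lambda>i t. if t = 1 then blk n i S1 else blk n i S2)"
    and "\<not> (\<forall>i\<in>{1..n-1}. blk n i R = 1\<^sub>m (n+1) \<and> blk n i S1 = 1\<^sub>m (n+1) \<and> blk n i S2 = 1\<^sub>m (n+1))"
  shows "\<exists>P R' S1' S2'. P \<in> carrier_mat (n+1) (n+1) \<and> invertible_mat P \<and>
     (fam1 R' S1' S2' \<or> fam2 R' S1' S2' \<or> fam3 R' S1' S2' \<or> fam4 R' S1' S2') \<and>
     (\<forall>i\<in>{1..n-1}. P * blk n i R = blk n i R' * P \<and>
                     P * blk n i S1 = blk n i S1' * P \<and>
                     P * blk n i S2 = blk n i S2' * P)"
proof -
  have n: "4 \<le> n" using assms(1) by simp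
  obtain r1 r2 r3 r4 r5 r6 r7 r8 r9 where R: "R = mat_of_rows_list 3 [[r1,r2,r3],[r4,r5,r6],[r7,r8,r9]]"
    using mat3[OF assms(2)] by blast
  obtain s1 s2 s3 s4 s5 s6 s7 s8 s9 where S1: "S1 = mat_of_rows_list 3 [[s1,s2,s3],[s4,s5,s6],[s7,s8,s9]]"
    using mat3[OF assms(3)] by blast
  obtain t1 t2 t3 t4 t5 t6 t7 t8 t9 where S2: "S2 = mat_of_rows_list 3 [[t1,t2,t3],[t4,t5,t6],[t7,t8,t9]]"
    using mat3[OF assms(4)] by blast
  note U = assms(8)[unfolded UV2_rep_def]
  note A3 = U[THEN conjunct2, THEN conjunct2, THEN conjunct1]
  note A4 = U[THEN conjunct2, THEN conjunct2, THEN conjunct2, THEN conjunct1]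
  note A5 = U[THEN conjunct2, THEN conjunct2, THEN conjunct2, THEN conjunct2, THEN conjunct1]
  note A7 = U[THEN conjunct2, THEN conjunct2, THEN conjunct2, THEN conjunct2, THEN conjunct2, THEN conjunct2, THEN conjunct1]
  note A8 = U[THEN conjunct2, THEN conjunct2, THEN conjunct2, THEN conjunct2, THEN conjunct2, THEN conjunct2, THEN conjunct2]
  have hc: "blk n 1 R * blk n 3 R = blk n 3 R * blk n 1 R" using A4[rule_format, of 1 3] n by simp
  have hq: "blk n 1 R * blk n 1 R = 1\<^sub>m (n+1)" using A5[rule_format, of 1] n by simp
  have hb: "blk n 1 R * blk n 2 R * blk n 1 R = blk n 2 R * blk n 1 R * blk n 2 R" using A3[rule_format, of 1] n by (simp add: numeral_2_eq_2)
  have hx1: "blk n 1 S1 * blk n 3 R = blk n 3 R * blk n 1 S1" using A7[rule_format, of 1 3 1] n by simp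
  have hy1: "blk n 3 S1 * blk n 1 R = blk n 1 R * blk n 3 S1" using A7[rule_format, of 3 1 1] n by simp
  have hm1: "blk n 1 R * blk n 2 R * blk n 1 S1 = blk n 2 S1 * blk n 1 R * blk n 2 R" using A8[rule_format, of 1 1] n by (simp add: numeral_2_eq_2)
  have hx2: "blk n 1 S2 * blk n 3 R = blk n 3 R * blk n 1 S2" using A7[rule_format, of 1 3 2] n by simp
  have hy2: "blk n 3 S2 * blk n 1 R = blk n 1 R * blk n 3 S2" using A7[rule_format, of 3 1 2] n by simp
  have hm2: "blk n 1 R * blk n 2 R * blk n 1 S2 = blk n 2 S2 * blk n 1 R * blk n 2 R" using A8[rule_format, of 1 2] n by (simp add: numeral_2_eq_2)
  note RC = R_bridge[OF n R hc hq hb]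
  note SC1 = S_bridge[OF n R S1 hx1 hy1 hm1]
  note SC2 = S_bridge[OF n R S2 hx2 hy2 hm2]
  have fam: "fam1 R S1 S2 \<or> fam2 R S1 S2 \<or> fam3 R S1 S2 \<or> fam4 R S1 S2"
  proof -
    from RC consider (a) "RF1 r1 r2 r3 r4 r5 r6 r7 r8 r9" | (b) "RF2 r1 r2 r3 r4 r5 r6 r7 r8 r9"
      | (c) "RF3 r1 r2 r3 r4 r5 r6 r7 r8 r9" | (d) "RF4 r1 r2 r3 r4 r5 r6 r7 r8 r9"
      | (e) "RI r1 r2 r3 r4 r5 r6 r7 r8 r9" by blast
    then show ?thesis
    proof cases
      case a
      have "fam1 R S1 S2" by (rule fam1_intro[OF a R S1 S2 _ _ assms(6,7)]) (rule SC1[THEN conjunct1, THEN mp, OF a], rule SC2[THEN conjunct1, THEN mp, OF a])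
      then show ?thesis by blast
    next
      case b
      have "fam2 R S1 S2" by (rule fam2_intro[OF b R S1 S2 _ _ assms(6,7)]) (rule SC1[THEN conjunct2, THEN conjunct1, THEN mp, OF b], rule SC2[THEN conjunct2, THEN conjunct1, THEN mp, OF b])
      then show ?thesis by blast
    next
      case c
      have "fam3 R S1 S2" by (rule fam3_intro[OF c R S1 S2 _ _ assms(6,7)]) (rule SC1[THEN conjunct2, THEN conjunct2, THEN conjunct1, THEN mp, OF c], rule SC2[THEN conjunct2, THEN conjunct2, THEN conjunct1, THEN mp, OF c])
      then show ?thesis by blast
    next
      case d
      have "fam4 R S1 S2" by (rule fam4_intro[OF d R S1 S2 _ _ assms(6,7)]) (rule SC1[THEN conjunct2, THEN conjunct2, THEN conjunct2, THEN conjunct1, THEN mp, OF d], rule SC2[THEN conjunct2, THEN conjunct2, THEN conjunct2, THEN conjunct1, THEN mp, OF d])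
      then show ?thesis by blast
    next
      case e
      have s: "s1=1 \<and> s2=0 \<and> s3=0 \<and> s4=0 \<and> s5=1 \<and> s6=0 \<and> s7=0 \<and> s8=0 \<and> s9=1" using SC1[THEN conjunct2, THEN conjunct2, THEN conjunct2, THEN conjunct2, THEN mp, OF e] .
      have t: "t1=1 \<and> t2=0 \<and> t3=0 \<and> t4=0 \<and> t5=1 \<and> t6=0 \<and> t7=0 \<and> t8=0 \<and> t9=1" using SC2[THEN conjunct2, THEN conjunct2, THEN conjunct2, THEN conjunct2, THEN mp, OF e] .
      have RI1: "R = 1\<^sub>m 3" using R e mat_id3 unfolding RI_def by simp
      have SI1: "S1 = 1\<^sub>m 3" using S1 s mat_id3 by simp
      have SI2: "S2 = 1\<^sub>m 3" using S2 t mat_id3 by simp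
      have False using assms(9) RI1 SI1 SI2 blk_one by simp
      then show ?thesis by blast
    qed
  qed
  have conj: "\<forall>i\<in>{1..n-1}. 1\<^sub>m (n+1) * blk n i R = blk n i R * 1\<^sub>m (n+1) \<and>
                     1\<^sub>m (n+1) * blk n i S1 = blk n i S1 * 1\<^sub>m (n+1) \<and>
                     1\<^sub>m (n+1) * blk n i S2 = blk n i S2 * 1\<^sub>m (n+1)"
  proof -
    have one: "1\<^sub>m (n+1) * blk n i X = blk n i X * 1\<^sub>m (n+1)" for i X
      using left_mult_one_mat[OF blk_carrier[of n i X]] right_mult_one_mat[OF blk_carrier[of n i X]] by simp
    show ?thesis by (intro ballI conjI one)
  qed
  show ?thesis
    apply (rule exI[of _ "1\<^sub>m (n+1)"], rule exI[of _ R], rule exI[of _ S1], rule exI[of _ S2])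
    using fam conj invertible_one by simp
qed

end
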